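(* Let $N\ge 1$, let $q\in\mathbb{C}\setminus\{0,\pm1\}$ be generic (i.e. $q^k\neq 1$ for all integers $k>0$), and let $R\in Mat_{N\times N}(\mathbb{C})^{\otimes 2}$ be a skew-invertible Hecke $R$-matrix. Let $W(R)$ be the quantum Weyl algebra with generating matrices $M$ and $D$, and put $\hat L = MD$. Then for every integer $n\ge 1$ the following identity holds in $Mat_{N\times N}(\mathbb{C})^{\otimes n}\otimes W(R)$: $$\hat L_{\overline{1}} \left(\hat L_{\overline{2}} + \frac{J_{2}^{-1} -1}{q-q^{-1}}\right) \cdots \left(\hat L_{\overline{n}} + \frac{J_{n}^{-1} -1}{q-q^{-1}}\right) = M_{\overline{1}} \cdots M_{\overline{n}}\, D_{\overline{n}} \cdots D_{\overline{1}}\, J_{1}^{-1} \cdots J_{n}^{-1}.$$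
   Context: Notation: for a matrix $A\in Mat_{N\times N}(\mathbb{C})\otimes U$ (entries in some vector space/algebra $U$), $A_i=\mathbb{E}\otimes\cdots\otimes A\otimes\cdots\otimes\mathbb{E}$ (with $A$ in the $i$-th tensor factor, $\mathbb{E}$ the identity matrix elsewhere); for $R\in Mat_{N\times N}(\mathbb{C})^{\otimes 2}$, $R_{ij}$ denotes $R$ acting in tensor factors $i,j$, and $R_i=R_{i\,i+1}$. $P_{12}$ is the permutation matrix, $P_{kl}^{mn}=\delta_k^n\delta_l^m$, and $Tr_{(k)}$ is the trace in the $k$-th tensor factor. A skew-invertible Hecke $R$-matrix is an invertible $R\in Mat_{N\times N}(\mathbb{C})^{\otimes 2}$ satisfying $R_1R_2R_1=R_2R_1R_2$, $R^2=1+(q-q^{-1})R$, and for which there is a matrix $\Psi$ with $Tr_{(2)}(R_{12}\Psi_{23})=P_{13}=Tr_{(2)}(\Psi_{12}R_{23})$. For an $N\times N$ matrix $A$ put $A_{\overline{1}}=A_1$ and $A_{\overline{k}}=R_{k-1}\cdots R_1A_1R_1^{-1}\cdots R_{k-1}^{-1}$ for $k>1$. The Reflection Equation algebra $M(R)$ is the unital associative algebra generated by entries $m_i^j$ of $M=\|m_i^j\|_{1\le i,j\le N}$ subject to $R_{12}M_1R_{12}M_1=M_1R_{12}M_1R_{12}$; $D(R^{-1})$ is the analogous algebra generated by the entries of a matrix $D$ with $R$ replaced by $R^{-1}$. The quantum Weyl algebra $W(R)$ is the quotient of the free product of $M(R)$ and $D(R^{-1})$ by the relations $D_1M_{\overline{2}}=R_1^{-1}+M_{\overline{2}}D_1R_1^{-2}$.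 $\hat L=MD$ is the matrix product of $M$ and $D$. $J_1=1$ and $J_k=R_{k-1}\cdots R_2R_1^2R_2\cdots R_{k-1}$ for $k>1$ (images of the Jucys–Murphy elements of the Hecke algebra); in the formula, $1$ denotes the identity matrix. *)

theory Defs
  imports Complex_Main
begin

text \<open>Elements of Mat_{N x N}(C)^{(tensor n)} (tensor) U are represented as functions on
  pairs of multi-indices (row multi-index, column multi-index); multi-indices are lists of
  length n with entries < N.  Lower index = row, upper index = column, so that
  (A B)_i^k = sum_j A_i^j B_j^k.  Entries in U are multiplied in the order of the matrix
  product (U may be noncommutative).\<close>

type_synonym 'a tmat = "nat list \<Rightarrow> nat list \<Rightarrow> 'a"

definition idx :: "nat \<Rightarrow> nat \<Rightarrow> nat list set" where
  "idx N n = {xs. length xs = n \<and> set xs \<subseteq> {..<N}}"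

definition tmul :: "nat \<Rightarrow> nat \<Rightarrow> 'a::semiring_0 tmat \<Rightarrow> 'a tmat \<Rightarrow> 'a tmat" where
  "tmul N n X Y = (\<lambda>I K. \<Sum>J\<in>idx N n. X I J * Y J K)"

definition tid :: "'a::{zero,one} tmat" where
  "tid = (\<lambda>I J. if I = J then 1 else 0)"

definition tadd :: "'a::plus tmat \<Rightarrow> 'a tmat \<Rightarrow> 'a tmat" where
  "tadd X Y = (\<lambda>I J. X I J + Y I J)"

definition tminus :: "'a::minus tmat \<Rightarrow> 'a tmat \<Rightarrow> 'a tmat" where
  "tminus X Y = (\<lambda>I J. X I J - Y I J)"

definition tsmul :: "'a::times \<Rightarrow> 'a tmat \<Rightarrow> 'a tmat" where
  "tsmul c X = (\<lambda>I J. c * X I J)"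

definition tmap :: "('a \<Rightarrow> 'b) \<Rightarrow> 'a tmat \<Rightarrow> 'b tmat" where
  "tmap f X = (\<lambda>I J. f (X I J))"

definition teq :: "nat \<Rightarrow> nat \<Rightarrow> 'a tmat \<Rightarrow> 'a tmat \<Rightarrow> bool" where
  "teq N n X Y = (\<forall>I\<in>idx N n. \<forall>J\<in>idx N n. X I J = Y I J)"

definition tprod :: "nat \<Rightarrow> nat \<Rightarrow> 'a::semiring_1 tmat list \<Rightarrow> 'a tmat" where
  "tprod N n Xs = foldr (tmul N n) Xs tid"

text \<open>A_1 = A (tensor) E (tensor) ... (tensor) E  (A in the first tensor factor).\<close>
definition op1 :: "(nat \<Rightarrow> nat \<Rightarrow> 'a::zero) \<Rightarrow> 'a tmat" where
  "op1 A I J = (if tl I = tl J then A (hd I) (hd J) else 0)"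

text \<open>X acting in the tensor factors at 0-based positions k, k+1 (i.e. X_{k+1,k+2} in the
  1-based notation of the paper; so the paper's R_i is op2 R (i-1)).
  X i j k l = X_{ij}^{kl}, rows (i,j), columns (k,l).\<close>
definition op2 :: "(nat \<Rightarrow> nat \<Rightarrow> nat \<Rightarrow> nat \<Rightarrow> 'a::zero) \<Rightarrow> nat \<Rightarrow> 'a tmat" where
  "op2 X k I J = (if (\<forall>p<length I. p \<noteq> k \<and> p \<noteq> Suc k \<longrightarrow> I ! p = J ! p)
                  then X (I ! k) (I ! Suc k) (J ! k) (J ! Suc k) else 0)"

text \<open>A_{bar k} in Mat^{(tensor n)} (tensor) U (k 1-based):
  A_{bar 1} = A_1, A_{bar (k+1)} = R_k A_{bar k} R_k^{-1}.  Complex scalars are embedded by sc.\<close>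
fun bar :: "nat \<Rightarrow> nat \<Rightarrow> (complex \<Rightarrow> 'a::ring_1) \<Rightarrow> (nat \<Rightarrow> nat \<Rightarrow> nat \<Rightarrow> nat \<Rightarrow> complex)
             \<Rightarrow> (nat \<Rightarrow> nat \<Rightarrow> nat \<Rightarrow> nat \<Rightarrow> complex) \<Rightarrow> (nat \<Rightarrow> nat \<Rightarrow> 'a) \<Rightarrow> nat \<Rightarrow> 'a tmat" where
  "bar N n sc R Ri A 0 = tid"
| "bar N n sc R Ri A (Suc 0) = op1 A"
| "bar N n sc R Ri A (Suc (Suc k)) =
     tmul N n (tmap sc (op2 R k)) (tmul N n (bar N n sc R Ri A (Suc k)) (tmap sc (op2 Ri k)))"

text \<open>J_k^{-1} (k 1-based): J_1^{-1} = 1, J_{k+1}^{-1} = R_k^{-1} J_k^{-1} R_k^{-1},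
  the inverse of J_{k+1} = R_k J_k R_k = R_k ... R_2 R_1^2 R_2 ... R_k.\<close>
fun Jinv :: "nat \<Rightarrow> nat \<Rightarrow> (nat \<Rightarrow> nat \<Rightarrow> nat \<Rightarrow> nat \<Rightarrow> complex) \<Rightarrow> nat \<Rightarrow> complex tmat" where
  "Jinv N n Ri 0 = tid"
| "Jinv N n Ri (Suc 0) = tid"
| "Jinv N n Ri (Suc (Suc k)) = tmul N n (op2 Ri k) (tmul N n (Jinv N n Ri (Suc k)) (op2 Ri k))"

definition skew_inv_hecke ::
  "nat \<Rightarrow> complex \<Rightarrow> (nat \<Rightarrow> nat \<Rightarrow> nat \<Rightarrow> nat \<Rightarrow> complex) \<Rightarrow> (nat \<Rightarrow> nat \<Rightarrow> nat \<Rightarrow> nat \<Rightarrow> complex) \<Rightarrow> bool" where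
  "skew_inv_hecke N q R Ri \<longleftrightarrow>
     teq N 2 (tmul N 2 (op2 R 0) (op2 Ri 0)) tid \<and>
     teq N 2 (tmul N 2 (op2 Ri 0) (op2 R 0)) tid \<and>
     teq N 3 (tmul N 3 (op2 R 0) (tmul N 3 (op2 R 1) (op2 R 0)))
             (tmul N 3 (op2 R 1) (tmul N 3 (op2 R 0) (op2 R 1))) \<and>
     teq N 2 (tmul N 2 (op2 R 0) (op2 R 0)) (tadd tid (tsmul (q - inverse q) (op2 R 0))) \<and>
     (\<exists>\<Psi> :: nat \<Rightarrow> nat \<Rightarrow> nat \<Rightarrow> nat \<Rightarrow> complex.
        \<forall>i<N. \<forall>k<N. \<forall>l<N. \<forall>m<N.
          (\<Sum>j<N. \<Sum>b<N. R i j l b * \<Psi> b k j m) = (if i = m \<and> k = l then 1 else 0) \<and>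
          (\<Sum>j<N. \<Sum>b<N. \<Psi> i j l b * R b k j m) = (if i = m \<and> k = l then 1 else 0))"

text \<open>sc makes the ring 'a a unital associative C-algebra (unital ring hom into the centre).\<close>
definition complex_alg :: "(complex \<Rightarrow> 'a::ring_1) \<Rightarrow> bool" where
  "complex_alg sc \<longleftrightarrow> sc 1 = 1 \<and> (\<forall>x y. sc (x + y) = sc x + sc y) \<and>
     (\<forall>x y. sc (x * y) = sc x * sc y) \<and> (\<forall>x a. sc x * a = a * sc x)"

text \<open>Defining relations of the quantum Weyl algebra W(R) for matrices M, D with entries in 'a:
  reflection equation for M with R, for D with R^{-1}, and D_1 M_{bar 2} = R_1^{-1} + M_{bar 2} D_1 R_1^{-2}.\<close>
definition weyl_rel :: "nat \<Rightarrow> (complex \<Rightarrow> 'a::ring_1) \<Rightarrow> (nat \<Rightarrow> nat \<Rightarrow> nat \<Rightarrow> nat \<Rightarrow> complex)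
     \<Rightarrow> (nat \<Rightarrow> nat \<Rightarrow> nat \<Rightarrow> nat \<Rightarrow> complex) \<Rightarrow> (nat \<Rightarrow> nat \<Rightarrow> 'a) \<Rightarrow> (nat \<Rightarrow> nat \<Rightarrow> 'a) \<Rightarrow> bool" where
  "weyl_rel N sc R Ri M D \<longleftrightarrow>
     (let R1 = tmap sc (op2 R 0); Ri1 = tmap sc (op2 Ri 0); M1 = op1 M; D1 = op1 D;
          M2 = bar N 2 sc R Ri M 2 in
      teq N 2 (tmul N 2 R1 (tmul N 2 M1 (tmul N 2 R1 M1)))
              (tmul N 2 M1 (tmul N 2 R1 (tmul N 2 M1 R1))) \<and>
      teq N 2 (tmul N 2 Ri1 (tmul N 2 D1 (tmul N 2 Ri1 D1)))
              (tmul N 2 D1 (tmul N 2 Ri1 (tmul N 2 D1 Ri1))) \<and>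
      teq N 2 (tmul N 2 D1 M2)
              (tadd Ri1 (tmul N 2 M2 (tmul N 2 D1 (tmul N 2 Ri1 Ri1)))))"

end

theory Submission
  imports Defs "HOL-Library.Function_Algebras"
begin

locale qw =
  fixes mul :: "'b::ab_group_add \<Rightarrow> 'b \<Rightarrow> 'b" (infixr "\<odot>" 70)
    and nrm :: "'b \<Rightarrow> 'b" and one :: 'b and n :: nat
    and r ri :: "nat \<Rightarrow> 'b" and M D L Ji :: "nat \<Rightarrow> 'b" and lam cc :: 'b
  assumes assoc: "(x \<odot> y) \<odot> z = x \<odot> (y \<odot> z)"
    and distL: "x \<odot> (y + z) = x \<odot> y + x \<odot> z"
    and distR: "(x + y) \<odot> z = x \<odot> z + y \<odot> z"
    and nrm_mul[simp]: "nrm (x \<odot> y) = x \<odot> y"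
    and nrm_l[simp]: "nrm x \<odot> y = x \<odot> y" and nrm_r[simp]: "x \<odot> nrm y = x \<odot> y"
    and one_l[simp]: "one \<odot> x = nrm x" and one_r[simp]: "x \<odot> one = nrm x"
    and nrm_add: "nrm (x + y) = nrm x + nrm y"
    and nrm_one[simp]: "nrm one = one"
    and nrm_rr[simp]: "nrm (r k) = r k" and nrm_ri[simp]: "nrm (ri k) = ri k"
    and nrm_M[simp]: "nrm (M k) = M k" and nrm_D[simp]: "nrm (D k) = D k"
    and nrm_L[simp]: "nrm (L k) = L k" and nrm_J[simp]: "nrm (Ji k) = Ji k"
    and nrm_lam[simp]: "nrm lam = lam" and nrm_cc[simp]: "nrm cc = cc"
    and lam_c: "lam \<odot> x = x \<odot> lam" and cc_c: "cc \<odot> x = x \<odot> cc"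
    and cc_lam: "cc \<odot> lam = one"
    and inv1: "k+2 \<le> n \<Longrightarrow> r k \<odot> ri k = one"
    and inv2: "k+2 \<le> n \<Longrightarrow> ri k \<odot> r k = one"
    and hecke: "k+2 \<le> n \<Longrightarrow> r k \<odot> r k = one + lam \<odot> r k"
    and braid: "k+3 \<le> n \<Longrightarrow> r k \<odot> r (Suc k) \<odot> r k = r (Suc k) \<odot> r k \<odot> r (Suc k)"
    and far: "i+2 \<le> j \<Longrightarrow> j+2 \<le> n \<Longrightarrow> r i \<odot> r j = r j \<odot> r i"
    and locM: "1 \<le> j \<Longrightarrow> j+2 \<le> n \<Longrightarrow> M 1 \<odot> r j = r j \<odot> M 1"
    and locD: "1 \<le> j \<Longrightarrow> j+2 \<le> n \<Longrightarrow> D 1 \<odot> r j = r j \<odot> D 1"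
    and Mrec: "M (Suc (Suc k)) = r k \<odot> M (Suc k) \<odot> ri k"
    and Drec: "D (Suc (Suc k)) = r k \<odot> D (Suc k) \<odot> ri k"
    and Lrec: "L (Suc (Suc k)) = r k \<odot> L (Suc k) \<odot> ri k"
    and L1: "L 1 = M 1 \<odot> D 1"
    and J1: "Ji 1 = one"
    and Jrec: "Ji (Suc (Suc k)) = ri k \<odot> Ji (Suc k) \<odot> ri k"
    and reD: "2 \<le> n \<Longrightarrow> ri 0 \<odot> D 1 \<odot> ri 0 \<odot> D 1 = D 1 \<odot> ri 0 \<odot> D 1 \<odot> ri 0"
    and weyl: "2 \<le> n \<Longrightarrow> D 1 \<odot> M 2 = ri 0 + M 2 \<odot> D 1 \<odot> ri 0 \<odot> ri 0"
begin

declare assoc[simp]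

lemma ext: "a \<odot> b = c \<Longrightarrow> a \<odot> b \<odot> z = c \<odot> z"
  by (metis assoc)

lemma ext3: "a \<odot> b \<odot> c = d \<Longrightarrow> a \<odot> b \<odot> c \<odot> z = d \<odot> z"
  by (metis assoc)

lemma c1[simp]: "k+2 \<le> n \<Longrightarrow> r k \<odot> ri k \<odot> z = nrm z"
  using ext[OF inv1] by simp
lemma c2[simp]: "k+2 \<le> n \<Longrightarrow> ri k \<odot> r k \<odot> z = nrm z"
  using ext[OF inv2] by simp
lemma c3[simp]: "k+2 \<le> n \<Longrightarrow> r k \<odot> ri k = one"
  using inv1 .
lemma c4[simp]: "k+2 \<le> n \<Longrightarrow> ri k \<odot> r k = one"
  using inv2 .

lemma nrm_idem[simp]: "nrm (nrm x) = nrm x"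
  by (metis one_l nrm_mul)

lemma mul_zero_r[simp]: "x \<odot> 0 = 0"
  by (metis add_cancel_right_right distL)
lemma mul_zero_l[simp]: "0 \<odot> x = 0"
  by (metis add_cancel_right_right distR)
lemma distL_minus: "x \<odot> (y - z) = x \<odot> y - x \<odot> z"
  by (metis add_diff_cancel diff_add_cancel distL eq_diff_eq)
lemma distR_minus: "(y - z) \<odot> x = y \<odot> x - z \<odot> x"
  by (metis add_diff_cancel diff_add_cancel distR eq_diff_eq)

definition comm :: "'b \<Rightarrow> 'b \<Rightarrow> bool" where "comm x y \<longleftrightarrow> x \<odot> y = y \<odot> x"

lemma comm_ext: "comm x y \<Longrightarrow> x \<odot> y \<odot> z = y \<odot> x \<odot> z"
  unfolding comm_def by (metis assoc)

lemma comm_sym: "comm x y \<Longrightarrow> comm y x" unfolding comm_def by simp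

lemma comm_mul: "comm x y \<Longrightarrow> comm x z \<Longrightarrow> comm x (y \<odot> z)"
  unfolding comm_def by (metis assoc)

lemma comm_ri: "comm x (r k) \<Longrightarrow> k+2 \<le> n \<Longrightarrow> comm x (ri k)"
proof -
  assume a: "comm x (r k)" "k+2 \<le> n"
  have "x \<odot> ri k = ri k \<odot> r k \<odot> x \<odot> ri k" using a by simp
  also have "\<dots> = ri k \<odot> x \<odot> r k \<odot> ri k" using comm_ext[OF a(1)] by simp
  also have "\<dots> = ri k \<odot> x" using a by simp
  finally show ?thesis unfolding comm_def by simp
qed

lemma far_c: "i+2 \<le> j \<Longrightarrow> j+2 \<le> n \<Longrightarrow> comm (r i) (r j)"
  unfolding comm_def by (rule far)
lemma far_ri: "i+2 \<le> j \<Longrightarrow> j+2 \<le> n \<Longrightarrow> comm (r i) (ri j)"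
  by (rule comm_ri[OF far_c]) auto
lemma far_ri2: "i+2 \<le> j \<Longrightarrow> j+2 \<le> n \<Longrightarrow> comm (r j) (ri i)"
  by (rule comm_ri[OF comm_sym[OF far_c]]) auto
lemma far_riri: "i+2 \<le> j \<Longrightarrow> j+2 \<le> n \<Longrightarrow> comm (ri i) (ri j)"
  by (rule comm_sym, rule comm_ri, rule comm_sym, rule far_ri) auto

lemma braid_ext: "k+3 \<le> n \<Longrightarrow> r k \<odot> r (Suc k) \<odot> r k \<odot> z = r (Suc k) \<odot> r k \<odot> r (Suc k) \<odot> z"
  using ext3[OF braid] by simp

lemma B2: assumes "a+3 \<le> n"
  shows "r (Suc a) \<odot> ri a \<odot> ri (Suc a) = ri a \<odot> ri (Suc a) \<odot> r a"
proof -
  have "ri a \<odot> ri (Suc a) \<odot> r a = ri a \<odot> ri (Suc a) \<odot> r a \<odot> r (Suc a) \<odot> r a \<odot> ri a \<odot> ri (Suc a)"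
    using assms by simp
  also have "\<dots> = ri a \<odot> ri (Suc a) \<odot> r (Suc a) \<odot> r a \<odot> r (Suc a) \<odot> ri a \<odot> ri (Suc a)"
    by (simp only: braid_ext[OF assms])
  also have "\<dots> = r (Suc a) \<odot> ri a \<odot> ri (Suc a)" using assms by simp
  finally show ?thesis by simp
qed

lemma B3: assumes "a+3 \<le> n"
  shows "r a \<odot> ri (Suc a) \<odot> ri a = ri (Suc a) \<odot> ri a \<odot> r (Suc a)"
proof -
  have "ri (Suc a) \<odot> ri a \<odot> r (Suc a) = ri (Suc a) \<odot> ri a \<odot> r (Suc a) \<odot> r a \<odot> r (Suc a) \<odot> ri (Suc a) \<odot> ri a"
    using assms by simp
  also have "\<dots> = ri (Suc a) \<odot> ri a \<odot> r a \<odot> r (Suc a) \<odot> r a \<odot> ri (Suc a) \<odot> ri a"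
    by (simp only: braid_ext[OF assms])
  also have "\<dots> = r a \<odot> ri (Suc a) \<odot> ri a" using assms by simp
  finally show ?thesis by simp
qed

lemma braid_i: assumes "a+3 \<le> n"
  shows "ri a \<odot> ri (Suc a) \<odot> ri a = ri (Suc a) \<odot> ri a \<odot> ri (Suc a)"
proof -
  have "ri a \<odot> ri (Suc a) \<odot> ri a = ri a \<odot> ri (Suc a) \<odot> ri a \<odot> r (Suc a) \<odot> r a \<odot> r (Suc a) \<odot> ri (Suc a) \<odot> ri a \<odot> ri (Suc a)"
    using assms by simp
  also have "\<dots> = ri a \<odot> ri (Suc a) \<odot> ri a \<odot> r a \<odot> r (Suc a) \<odot> r a \<odot> ri (Suc a) \<odot> ri a \<odot> ri (Suc a)"
    by (simp only: braid_ext[OF assms])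
  also have "\<dots> = ri (Suc a) \<odot> ri a \<odot> ri (Suc a)" using assms by simp
  finally show ?thesis .
qed

lemma r_split: "k+2 \<le> n \<Longrightarrow> r k = ri k + lam"
proof -
  assume a: "k+2 \<le> n"
  have "r k = r k \<odot> r k \<odot> ri k" using a by simp
  also have "\<dots> = (r k \<odot> r k) \<odot> ri k" by simp
  also have "\<dots> = (one + lam \<odot> r k) \<odot> ri k" using hecke[OF a] by simp
  also have "\<dots> = ri k + lam" using a by (simp add: distR)
  finally show ?thesis .
qed

lemma comm_one: "nrm x = x \<Longrightarrow> comm x one" unfolding comm_def by simp
lemma comm_one_l: "nrm x = x \<Longrightarrow> comm one x" unfolding comm_def by simp

definition barseq :: "(nat \<Rightarrow> 'b) \<Rightarrow> bool" where
  "barseq X \<longleftrightarrow> (\<forall>k. X (Suc (Suc k)) = r k \<odot> X (Suc k) \<odot> ri k) \<and>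
     (\<forall>j. 1 \<le> j \<longrightarrow> j+2 \<le> n \<longrightarrow> comm (X 1) (r j)) \<and> (\<forall>k. nrm (X k) = X k)"

lemma barseq_M: "barseq M" unfolding barseq_def comm_def using Mrec locM by simp
lemma barseq_D: "barseq D" unfolding barseq_def comm_def using Drec locD by simp
lemma barseq_L: "barseq L"
proof -
  have "comm (L 1) (r j)" if "1 \<le> j" "j+2 \<le> n" for j
    unfolding L1 using that locM locD by (intro comm_sym[OF comm_mul]) (auto simp: comm_def)
  then show ?thesis unfolding barseq_def using Lrec by simp
qed

lemma barA: "barseq X \<Longrightarrow> 1 \<le> k \<Longrightarrow> k \<le> j \<Longrightarrow> j+2 \<le> n \<Longrightarrow> comm (X k) (r j)"
proof (induction k arbitrary: j rule: less_induct)
  case (less k)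
  show ?case
  proof (cases k)
    case 0 then show ?thesis using less by simp
  next
    case (Suc k1)
    show ?thesis
    proof (cases k1)
      case 0 then show ?thesis using less Suc unfolding barseq_def by simp
    next
      case (Suc k2)
      have X: "X k = r k2 \<odot> X (Suc k2) \<odot> ri k2" using less(2) \<open>k = Suc k1\<close> Suc
        unfolding barseq_def by simp
      have i1: "comm (r j) (r k2)"
        by (rule comm_sym, rule far_c) (use less \<open>k = Suc k1\<close> Suc in auto)
      have i2: "comm (r j) (X (Suc k2))" 
        by (rule comm_sym, rule less(1)) (use less \<open>k = Suc k1\<close> Suc in auto)
      have i3: "comm (r j) (ri k2)" using less \<open>k = Suc k1\<close> Suc
        by (intro far_ri2) auto
      show ?thesis unfolding X by (rule comm_sym, intro comm_mul i1 i2 i3)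
    qed
  qed
qed

lemma barA_i: assumes "barseq X" "1 \<le> k" "k \<le> j" "j+2 \<le> n" shows "comm (X k) (ri j)"
  using comm_ri[OF barA[OF assms] assms(4)] .

lemma barB: "barseq X \<Longrightarrow> j+3 \<le> k \<Longrightarrow> k \<le> n \<Longrightarrow> comm (X k) (r j)"
proof (induction k rule: less_induct)
  case (less k)
  obtain k' where k': "k = Suc (Suc k')" using less(3)
    by (cases k; cases "k - 1") auto
  have X: "X k = r k' \<odot> X (Suc k') \<odot> ri k'" using less(2) k' unfolding barseq_def by simp
  show ?case
  proof (cases "j+3 \<le> Suc k'")
    case True
    have i1: "comm (r j) (r k')" using less k' True by (intro far_c) auto
    have i2: "comm (r j) (X (Suc k'))" 
      by (rule comm_sym, rule less(1)) (use less k' True in auto)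
    have i3: "comm (r j) (ri k')" using less k' True by (intro far_ri) auto
    show ?thesis unfolding X by (rule comm_sym, intro comm_mul i1 i2 i3)
  next
    case False
    then have kj: "k' = Suc j" using less(3) k' by simp
    have n3: "j+3 \<le> n" using less k' by simp
    have X2: "X (Suc k') = r j \<odot> X (Suc j) \<odot> ri j" using less(2) kj unfolding barseq_def by simp
    have Xk: "X k = r (Suc j) \<odot> r j \<odot> X (Suc j) \<odot> ri j \<odot> ri (Suc j)" using X X2 kj by simp
    have cA: "comm (X (Suc j)) (r (Suc j))" using less n3 by (intro barA) auto
    have "r j \<odot> X k = r j \<odot> r (Suc j) \<odot> r j \<odot> X (Suc j) \<odot> ri j \<odot> ri (Suc j)"
      unfolding Xk by simp
    also have "\<dots> = r (Suc j) \<odot> r j \<odot> r (Suc j) \<odot> X (Suc j) \<odot> ri j \<odot> ri (Suc j)"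
      by (simp only: braid_ext[OF n3])
    also have "\<dots> = r (Suc j) \<odot> r j \<odot> X (Suc j) \<odot> r (Suc j) \<odot> ri j \<odot> ri (Suc j)"
      by (simp only: comm_ext[OF comm_sym[OF cA]])
    also have "\<dots> = r (Suc j) \<odot> r j \<odot> X (Suc j) \<odot> ri j \<odot> ri (Suc j) \<odot> r j"
      by (simp only: B2[OF n3])
    also have "\<dots> = X k \<odot> r j" unfolding Xk by simp
    finally show ?thesis unfolding comm_def by simp
  qed
qed

lemma JA: "1 \<le> k \<Longrightarrow> k \<le> j \<Longrightarrow> j+2 \<le> n \<Longrightarrow> comm (Ji k) (r j)"
proof (induction k arbitrary: j rule: less_induct)
  case (less k)
  show ?case
  proof (cases k)
    case 0 then show ?thesis using less by simp
  next
    case (Suc k1)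
    show ?thesis
    proof (cases k1)
      case 0 then show ?thesis using less Suc J1 comm_sym[OF comm_one[OF nrm_rr]] by simp
    next
      case (Suc k2)
      have X: "Ji k = ri k2 \<odot> Ji (Suc k2) \<odot> ri k2" using \<open>k = Suc k1\<close> Suc Jrec by simp
      have i1: "comm (r j) (ri k2)" using less \<open>k = Suc k1\<close> Suc
        by (intro far_ri2) auto
      have i2: "comm (r j) (Ji (Suc k2))" 
        by (rule comm_sym, rule less(1)) (use less \<open>k = Suc k1\<close> Suc in auto)
      show ?thesis unfolding X by (rule comm_sym, intro comm_mul i1 i2)
    qed
  qed
qed

lemma JB: "j+3 \<le> k \<Longrightarrow> k \<le> n \<Longrightarrow> comm (Ji k) (r j)"
proof (induction k rule: less_induct)
  case (less k)
  obtain k' where k': "k = Suc (Suc k')" using less(2)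
    by (cases k; cases "k - 1") auto
  have X: "Ji k = ri k' \<odot> Ji (Suc k') \<odot> ri k'" using k' Jrec by simp
  show ?case
  proof (cases "j+3 \<le> Suc k'")
    case True
    have i1: "comm (r j) (ri k')" using less k' True by (intro far_ri) auto
    have i2: "comm (r j) (Ji (Suc k'))" 
      by (rule comm_sym, rule less(1)) (use less k' True in auto)
    show ?thesis unfolding X by (rule comm_sym, intro comm_mul i1 i2)
  next
    case False
    then have kj: "k' = Suc j" using less(2) k' by simp
    have n3: "j+3 \<le> n" using less k' by simp
    have X2: "Ji (Suc k') = ri j \<odot> Ji (Suc j) \<odot> ri j" using kj Jrec by simp
    have Xk: "Ji k = ri (Suc j) \<odot> ri j \<odot> Ji (Suc j) \<odot> ri j \<odot> ri (Suc j)" using X X2 kj by simp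
    have cA: "comm (Ji (Suc j)) (r (Suc j))" using less n3 by (intro JA) auto
    have "r j \<odot> Ji k = r j \<odot> ri (Suc j) \<odot> ri j \<odot> Ji (Suc j) \<odot> ri j \<odot> ri (Suc j)"
      unfolding Xk by simp
    also have "\<dots> = ri (Suc j) \<odot> ri j \<odot> r (Suc j) \<odot> Ji (Suc j) \<odot> ri j \<odot> ri (Suc j)"
      using ext3[OF B3[OF n3]] by simp
    also have "\<dots> = ri (Suc j) \<odot> ri j \<odot> Ji (Suc j) \<odot> r (Suc j) \<odot> ri j \<odot> ri (Suc j)"
      by (simp only: comm_ext[OF comm_sym[OF cA]])
    also have "\<dots> = ri (Suc j) \<odot> ri j \<odot> Ji (Suc j) \<odot> ri j \<odot> ri (Suc j) \<odot> r j"
      by (simp only: B2[OF n3])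
    also have "\<dots> = Ji k \<odot> r j" unfolding Xk by simp
    finally show ?thesis unfolding comm_def by simp
  qed
qed

lemma comm_J: "nrm y = y \<Longrightarrow> (\<And>j. j+2 \<le> k \<Longrightarrow> comm y (r j)) \<Longrightarrow> 1 \<le> k \<Longrightarrow> k \<le> n \<Longrightarrow> comm y (Ji k)"
proof (induction k rule: less_induct)
  case (less k)
  show ?case
  proof (cases "k = 1")
    case True then show ?thesis using less J1 comm_one by simp
  next
    case False
    then obtain k' where k': "k = Suc (Suc k')" using less(4) by (metis One_nat_def Suc_le_D le_SucE le_zero_eq not0_implies_Suc)
    have X: "Ji k = ri k' \<odot> Ji (Suc k') \<odot> ri k'" using k' Jrec by simp
    have c: "comm y (ri k')" using less k' by (intro comm_ri less(3)) auto
    show ?thesis unfolding X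
      by (intro comm_mul c less(1)) (use less k' in auto)
  qed
qed

definition cj :: "nat \<Rightarrow> 'b \<Rightarrow> 'b" where
  "cj a x = r a \<odot> r (Suc a) \<odot> x \<odot> ri (Suc a) \<odot> ri a"

lemma cj_mul: "a+3 \<le> n \<Longrightarrow> cj a (x \<odot> y) = cj a x \<odot> cj a y"
  unfolding cj_def by simp

lemma cj_add: "cj a (x + y) = cj a x + cj a y"
  unfolding cj_def by (simp add: distL distR)

lemma cj_ri: "a+3 \<le> n \<Longrightarrow> cj a (ri a) = ri (Suc a)"
proof -
  assume n3: "a+3 \<le> n"
  have "cj a (ri a) = r a \<odot> r (Suc a) \<odot> ri a \<odot> ri (Suc a) \<odot> ri a" unfolding cj_def by simp
  also have "\<dots> = r a \<odot> r (Suc a) \<odot> ri (Suc a) \<odot> ri a \<odot> ri (Suc a)"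
    by (simp only: braid_i[OF n3])
  also have "\<dots> = ri (Suc a)" using n3 by simp
  finally show ?thesis .
qed

lemma cj_D: "a+3 \<le> n \<Longrightarrow> cj a (D (Suc a)) = D (Suc (Suc a))"
proof -
  assume n3: "a+3 \<le> n"
  have cA: "comm (D (Suc a)) (r (Suc a))" using n3 barA[OF barseq_D, of "Suc a" "Suc a"] by simp
  have "cj a (D (Suc a)) = r a \<odot> r (Suc a) \<odot> D (Suc a) \<odot> ri (Suc a) \<odot> ri a" unfolding cj_def by simp
  also have "\<dots> = r a \<odot> D (Suc a) \<odot> r (Suc a) \<odot> ri (Suc a) \<odot> ri a"
    by (simp only: comm_ext[OF comm_sym[OF cA]])
  also have "\<dots> = D (Suc (Suc a))" using n3 Drec by simp
  finally show ?thesis .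
qed

lemma cj_M: "a+3 \<le> n \<Longrightarrow> cj a (M (Suc (Suc a))) = M (Suc (Suc (Suc a)))"
proof -
  assume n3: "a+3 \<le> n"
  have cA: "comm (M (Suc a)) (r (Suc a))" using n3 barA[OF barseq_M, of "Suc a" "Suc a"] by simp
  have "cj a (M (Suc (Suc a))) = r a \<odot> r (Suc a) \<odot> r a \<odot> M (Suc a) \<odot> ri a \<odot> ri (Suc a) \<odot> ri a"
    unfolding cj_def Mrec by simp
  also have "\<dots> = r (Suc a) \<odot> r a \<odot> r (Suc a) \<odot> M (Suc a) \<odot> ri a \<odot> ri (Suc a) \<odot> ri a"
    by (simp only: braid_ext[OF n3])
  also have "\<dots> = r (Suc a) \<odot> r a \<odot> r (Suc a) \<odot> M (Suc a) \<odot> ri (Suc a) \<odot> ri a \<odot> ri (Suc a)"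
    by (simp only: braid_i[OF n3])
  also have "\<dots> = r (Suc a) \<odot> r a \<odot> M (Suc a) \<odot> r (Suc a) \<odot> ri (Suc a) \<odot> ri a \<odot> ri (Suc a)"
    by (simp only: comm_ext[OF comm_sym[OF cA]])
  also have "\<dots> = M (Suc (Suc (Suc a)))" using n3 Mrec by simp
  finally show ?thesis .
qed

lemma weyl_sh: "a+2 \<le> n \<Longrightarrow>
  D (Suc a) \<odot> M (Suc (Suc a)) = ri a + M (Suc (Suc a)) \<odot> D (Suc a) \<odot> ri a \<odot> ri a"
proof (induction a)
  case 0 then show ?case using weyl by (simp add: numeral_2_eq_2)
next
  case (Suc a)
  then have n3: "a+3 \<le> n" by simp
  have "cj a (D (Suc a) \<odot> M (Suc (Suc a))) = cj a (ri a + M (Suc (Suc a)) \<odot> D (Suc a) \<odot> ri a \<odot> ri a)"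
    using Suc by simp
  then show ?case using n3 by (simp add: cj_mul cj_add cj_ri cj_D cj_M del: assoc)
qed

lemma reD_sh: "a+2 \<le> n \<Longrightarrow>
  ri a \<odot> D (Suc a) \<odot> ri a \<odot> D (Suc a) = D (Suc a) \<odot> ri a \<odot> D (Suc a) \<odot> ri a"
proof (induction a)
  case 0 then show ?case using reD by simp
next
  case (Suc a)
  then have n3: "a+3 \<le> n" by simp
  have "cj a (ri a \<odot> D (Suc a) \<odot> ri a \<odot> D (Suc a)) = cj a (D (Suc a) \<odot> ri a \<odot> D (Suc a) \<odot> ri a)"
    using Suc by simp
  then show ?case using n3 by (simp add: cj_mul cj_add cj_ri cj_D cj_M del: assoc)
qed


lemma cc_ext: "x \<odot> cc \<odot> y = cc \<odot> x \<odot> y"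
  using ext[OF cc_c[symmetric]] by simp
lemma lam_ext: "x \<odot> lam \<odot> y = lam \<odot> x \<odot> y"
  using ext[OF lam_c[symmetric]] by simp

lemma comm_addL: "comm x y \<Longrightarrow> comm z y \<Longrightarrow> comm (x + z) y"
  unfolding comm_def by (simp add: distL distR)
lemma comm_diffL: "comm x y \<Longrightarrow> comm z y \<Longrightarrow> comm (x - z) y"
  unfolding comm_def by (simp add: distL_minus distR_minus)
lemma comm_ccL: "comm x y \<Longrightarrow> comm (cc \<odot> x) y"
  unfolding comm_def by (metis assoc cc_c)

primrec Zp :: "nat \<Rightarrow> 'b" where
  "Zp 0 = one" | "Zp (Suc m) = D (Suc m) \<odot> Zp m"

lemma nrm_Zp[simp]: "nrm (Zp m) = Zp m" by (cases m) auto

lemma Zp_comm: "m \<le> j \<Longrightarrow> j+2 \<le> n \<Longrightarrow> comm (Zp m) (r j)"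
proof (induction m)
  case 0 then show ?case by (simp add: comm_def)
next
  case (Suc m)
  have "comm (r j) (D (Suc m))" using Suc by (intro comm_sym[OF barA[OF barseq_D]]) auto
  moreover have "comm (r j) (Zp m)" using Suc by (intro comm_sym[OF Suc.IH]) auto
  ultimately show ?case by (simp add: comm_sym comm_mul)
qed

lemma Zp_comm_i: "m \<le> j \<Longrightarrow> j+2 \<le> n \<Longrightarrow> comm (Zp m) (ri j)"
  using comm_ri[OF Zp_comm] by simp

lemma LMD: "1 \<le> k \<Longrightarrow> k \<le> n \<Longrightarrow> L k = M k \<odot> D k"
proof (induction k)
  case 0 then show ?case by simp
next
  case (Suc k)
  show ?case
  proof (cases k)
    case 0 then show ?thesis using L1 by simp
  next
    case (Suc a)
    with Suc.prems Suc.IH show ?thesis using Lrec Mrec Drec by simp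
  qed
qed

definition F :: "nat \<Rightarrow> 'b" where "F k = L k + cc \<odot> (Ji k - one)"

lemma nrm_F[simp]: "nrm (F k) = F k"
  unfolding F_def by (simp add: nrm_add)

lemma star: "a+1 \<le> n \<Longrightarrow> Zp a \<odot> F (Suc a) = L (Suc a) \<odot> Zp a \<odot> Ji (Suc a)"
proof (induction a)
  case 0 then show ?case using J1 by (simp add: F_def nrm_add)
next
  case (Suc a)
  have n2: "a+2 \<le> n" using Suc by simp
  define A where "A = D (Suc a)"
  define Z where "Z = Zp a"
  define J where "J = Ji (Suc a)"
  define P where "P = M (Suc (Suc a))"
  define \<rho> where "\<rho> = r a"
  define \<rho>' where "\<rho>' = ri a"
  have IH: "Z \<odot> F (Suc a) = L (Suc a) \<odot> Z \<odot> J" using Suc n2 unfolding Z_def J_def by simp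
  have cz: "comm Z \<rho>" "comm Z \<rho>'" unfolding Z_def \<rho>_def \<rho>'_def using n2
    by (auto intro: Zp_comm Zp_comm_i)
  have IH': "Z \<odot> L (Suc a) \<odot> w = (L (Suc a) \<odot> Z \<odot> J - cc \<odot> (Z \<odot> J - Z)) \<odot> w" for w
  proof -
    have "Z \<odot> F (Suc a) = Z \<odot> L (Suc a) + cc \<odot> (Z \<odot> J - Z)"
      unfolding F_def J_def Z_def by (simp add: distL distL_minus cc_ext cc_c)
    then have "Z \<odot> L (Suc a) = L (Suc a) \<odot> Z \<odot> J - cc \<odot> (Z \<odot> J - Z)" using IH
      by (simp add: eq_diff_eq)
    then show ?thesis by (metis assoc)
  qed
  have W: "A \<odot> P = \<rho>' + P \<odot> A \<odot> \<rho>' \<odot> \<rho>'" unfolding A_def P_def \<rho>'_def using weyl_sh[OF n2] by simp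
  have RE: "A \<odot> \<rho>' \<odot> A \<odot> \<rho>' \<odot> w = \<rho>' \<odot> A \<odot> \<rho>' \<odot> A \<odot> w" for w
    unfolding A_def \<rho>'_def using arg_cong[OF reD_sh[OF n2, symmetric], of "\<lambda>t. t \<odot> w"] by simp
  have h2: "A \<odot> \<rho> \<odot> L (Suc a) \<odot> w = A \<odot> w + P \<odot> A \<odot> \<rho>' \<odot> A \<odot> w" for w
  proof -
    have "A \<odot> \<rho> \<odot> L (Suc a) \<odot> w = A \<odot> P \<odot> \<rho> \<odot> A \<odot> w"
      unfolding A_def P_def \<rho>_def using LMD[of "Suc a"] n2 Mrec by simp
    also have "\<dots> = (A \<odot> P) \<odot> (\<rho> \<odot> A \<odot> w)" by simp
    also have "\<dots> = A \<odot> w + P \<odot> A \<odot> \<rho>' \<odot> A \<odot> w"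
      unfolding W using n2 unfolding A_def \<rho>_def \<rho>'_def P_def by (simp add: distR)
    finally show ?thesis .
  qed
  have rs: "\<rho> = \<rho>' + lam" unfolding \<rho>_def \<rho>'_def using r_split n2 by simp
  have ccl: "cc \<odot> A \<odot> Z \<odot> lam \<odot> w = A \<odot> Z \<odot> w" for w
  proof -
    have "cc \<odot> A \<odot> Z \<odot> lam \<odot> w = A \<odot> Z \<odot> cc \<odot> lam \<odot> w" by (simp add: cc_ext)
    also have "\<dots> = A \<odot> Z \<odot> w" using ext[OF cc_lam, of w] by simp
    finally show ?thesis .
  qed
  have L2: "L (Suc (Suc a)) = \<rho> \<odot> L (Suc a) \<odot> \<rho>'" unfolding \<rho>_def \<rho>'_def using Lrec by simp
  have J2: "Ji (Suc (Suc a)) = \<rho>' \<odot> J \<odot> \<rho>'" unfolding J_def \<rho>'_def using Jrec by simp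
  have Z2: "Zp (Suc a) = A \<odot> Z" unfolding A_def Z_def by simp
  have "Zp (Suc a) \<odot> F (Suc (Suc a)) = A \<odot> Z \<odot> L (Suc (Suc a)) + cc \<odot> (A \<odot> Z \<odot> Ji (Suc (Suc a)) - A \<odot> Z)"
    unfolding Z2 F_def by (simp add: distL distL_minus cc_ext cc_c Z_def A_def)
  also have "A \<odot> Z \<odot> L (Suc (Suc a)) = A \<odot> \<rho> \<odot> (Z \<odot> L (Suc a) \<odot> \<rho>')"
    unfolding L2 by (simp add: comm_ext[OF cz(1)])
  also have "\<dots> = A \<odot> \<rho> \<odot> L (Suc a) \<odot> Z \<odot> J \<odot> \<rho>' - cc \<odot> (A \<odot> \<rho> \<odot> Z \<odot> J \<odot> \<rho>' - A \<odot> \<rho> \<odot> Z \<odot> \<rho>')"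
    unfolding IH' by (simp add: distL distR distL_minus distR_minus cc_ext)
  also have "\<dots> = (A \<odot> Z \<odot> J \<odot> \<rho>' + P \<odot> A \<odot> \<rho>' \<odot> A \<odot> Z \<odot> J \<odot> \<rho>') - cc \<odot> (A \<odot> Z \<odot> \<rho>' \<odot> J \<odot> \<rho>' + A \<odot> Z \<odot> lam \<odot> J \<odot> \<rho>' - A \<odot> Z)"
  proof -
    have "A \<odot> \<rho> \<odot> L (Suc a) \<odot> Z \<odot> J \<odot> \<rho>' - cc \<odot> (A \<odot> \<rho> \<odot> Z \<odot> J \<odot> \<rho>' - A \<odot> \<rho> \<odot> Z \<odot> \<rho>')
       = (A \<odot> Z \<odot> J \<odot> \<rho>' + P \<odot> A \<odot> \<rho>' \<odot> A \<odot> Z \<odot> J \<odot> \<rho>') - cc \<odot> (A \<odot> Z \<odot> \<rho> \<odot> J \<odot> \<rho>' - A \<odot> Z \<odot> \<rho> \<odot> \<rho>')"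
      unfolding h2 by (simp only: comm_ext[OF comm_sym[OF cz(1)]])
    also have "A \<odot> Z \<odot> \<rho> \<odot> \<rho>' = A \<odot> Z" using n2 unfolding \<rho>_def \<rho>'_def Z_def A_def by simp
    also have "A \<odot> Z \<odot> \<rho> \<odot> J \<odot> \<rho>' = A \<odot> Z \<odot> \<rho>' \<odot> J \<odot> \<rho>' + A \<odot> Z \<odot> lam \<odot> J \<odot> \<rho>'"
      unfolding rs by (simp add: distL distR)
    finally show ?thesis by simp
  qed
  also have "A \<odot> Z \<odot> Ji (Suc (Suc a)) = A \<odot> Z \<odot> \<rho>' \<odot> J \<odot> \<rho>'" unfolding J2 by simp
  finally have lhs: "Zp (Suc a) \<odot> F (Suc (Suc a)) = P \<odot> A \<odot> \<rho>' \<odot> A \<odot> Z \<odot> J \<odot> \<rho>'"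
    using ccl[of "J \<odot> \<rho>'"] by (simp add: distL distL_minus algebra_simps)
  have "L (Suc (Suc a)) \<odot> Zp (Suc a) \<odot> Ji (Suc (Suc a)) = P \<odot> \<rho> \<odot> A \<odot> \<rho>' \<odot> A \<odot> Z \<odot> \<rho>' \<odot> J \<odot> \<rho>'"
    unfolding Z2 J2 using LMD[of "Suc (Suc a)"] n2 Drec unfolding P_def \<rho>_def \<rho>'_def A_def by simp
  also have "\<dots> = P \<odot> \<rho> \<odot> A \<odot> \<rho>' \<odot> A \<odot> \<rho>' \<odot> Z \<odot> J \<odot> \<rho>'"
    by (simp only: comm_ext[OF cz(2)])
  also have "\<dots> = P \<odot> \<rho> \<odot> \<rho>' \<odot> A \<odot> \<rho>' \<odot> A \<odot> Z \<odot> J \<odot> \<rho>'"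
    by (simp only: RE)
  also have "\<dots> = P \<odot> A \<odot> \<rho>' \<odot> A \<odot> Z \<odot> J \<odot> \<rho>'" using n2 unfolding \<rho>_def \<rho>'_def by simp
  finally show ?case using lhs by simp
qed

definition prodl :: "'b list \<Rightarrow> 'b" where "prodl xs = foldr (\<odot>) xs one"

lemma prodl_Nil[simp]: "prodl [] = one" and prodl_Cons[simp]: "prodl (x # xs) = x \<odot> prodl xs"
  unfolding prodl_def by simp_all

lemma nrm_prodl[simp]: "nrm (prodl xs) = prodl xs" by (cases xs) auto

lemma prodl_snoc: "nrm x = x \<Longrightarrow> prodl (xs @ [x]) = prodl xs \<odot> x"
  by (induction xs) auto

lemma comm_prodl: "nrm y = y \<Longrightarrow> (\<And>x. x \<in> set xs \<Longrightarrow> comm y x) \<Longrightarrow> comm y (prodl xs)"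
  by (induction xs) (auto intro: comm_mul comm_one)

lemma Zp_prodl: "Zp m = prodl (map D (rev [1..<m+1]))"
  by (induction m) auto

lemma main_alg: "1 \<le> m \<Longrightarrow> m \<le> n \<Longrightarrow>
  L 1 \<odot> prodl (map F [2..<m+1]) = prodl (map M [1..<m+1]) \<odot> Zp m \<odot> prodl (map Ji [1..<m+1])"
proof (induction m rule: dec_induct)
  case base
  show ?case using J1 L1 by simp
next
  case (step m)
  have m1: "m+1 \<le> n" using step by simp
  define Jp where "Jp = prodl (map Ji [1..<m+1])"
  define Mp where "Mp = prodl (map M [1..<m+1])"
  have cF: "comm (F (Suc m)) Jp" unfolding Jp_def
  proof (rule comm_prodl)
    fix x assume "x \<in> set (map Ji [1..<m+1])"
    then obtain k where k: "x = Ji k" "1 \<le> k" "k \<le> m" by auto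
    show "comm (F (Suc m)) x" unfolding k(1)
    proof (rule comm_J)
      fix j assume j: "j+2 \<le> k"
      show "comm (F (Suc m)) (r j)" unfolding F_def using j k m1
        by (intro comm_addL comm_ccL comm_diffL barB[OF barseq_L] JB comm_one_l) auto
    qed (use k m1 in auto)
  qed simp
  have cJ: "comm (Ji (Suc m)) Jp" unfolding Jp_def
  proof (rule comm_prodl)
    fix x assume "x \<in> set (map Ji [1..<m+1])"
    then obtain k where k: "x = Ji k" "1 \<le> k" "k \<le> m" by auto
    show "comm (Ji (Suc m)) x" unfolding k(1)
    proof (rule comm_J)
      fix j assume j: "j+2 \<le> k"
      show "comm (Ji (Suc m)) (r j)" using j k m1 by (intro JB) auto
    qed (use k m1 in auto)
  qed simp
  have e1: "[2..<Suc m+1] = [2..<m+1] @ [Suc m]" using step by simp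
  have e2: "[1..<Suc m+1] = [1..<m+1] @ [Suc m]" by simp
  have "L 1 \<odot> prodl (map F [2..<Suc m+1]) = (L 1 \<odot> prodl (map F [2..<m+1])) \<odot> F (Suc m)"
    unfolding e1 by (simp add: prodl_snoc)
  also have "\<dots> = Mp \<odot> Zp m \<odot> Jp \<odot> F (Suc m)" using step unfolding Mp_def Jp_def by simp
  also have "\<dots> = Mp \<odot> Zp m \<odot> F (Suc m) \<odot> Jp" using cF unfolding comm_def by simp
  also have "\<dots> = Mp \<odot> L (Suc m) \<odot> Zp m \<odot> Ji (Suc m) \<odot> Jp"
    using arg_cong[OF star[of m], of "\<lambda>t. Mp \<odot> t \<odot> Jp"] m1 by simp
  also have "\<dots> = Mp \<odot> M (Suc m) \<odot> D (Suc m) \<odot> Zp m \<odot> Jp \<odot> Ji (Suc m)"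
    using cJ LMD[of "Suc m"] m1 unfolding comm_def by simp
  also have "\<dots> = prodl (map M [1..<Suc m+1]) \<odot> Zp (Suc m) \<odot> prodl (map Ji [1..<Suc m+1])"
    unfolding e2 Mp_def Jp_def by (simp add: prodl_snoc)
  finally show ?case .
qed

end

lemma finite_idx[simp]: "finite (idx N n)"
proof -
  have "idx N n = {xs. set xs \<subseteq> {..<N} \<and> length xs = n}" unfolding idx_def by auto
  then show ?thesis using finite_lists_length_eq[of "{..<N}" n] by simp
qed

lemma idx_len: "I \<in> idx N n \<Longrightarrow> length I = n" unfolding idx_def by simp
lemma idx_nth: "I \<in> idx N n \<Longrightarrow> p < n \<Longrightarrow> I ! p < N" unfolding idx_def
  by (auto simp: subset_iff)

definition nr :: "nat \<Rightarrow> nat \<Rightarrow> 'a::zero tmat \<Rightarrow> 'a tmat" where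
  "nr N n X = (\<lambda>I J. if I \<in> idx N n \<and> J \<in> idx N n then X I J else 0)"

definition tm :: "nat \<Rightarrow> nat \<Rightarrow> 'a::semiring_0 tmat \<Rightarrow> 'a tmat \<Rightarrow> 'a tmat" where
  "tm N n X Y = nr N n (tmul N n X Y)"

lemma teq_nr: "teq N n X Y \<longleftrightarrow> nr N n X = nr N n Y"
  unfolding teq_def nr_def by (auto simp: fun_eq_iff)

lemma nr_nr[simp]: "nr N n (nr N n X) = nr N n X" unfolding nr_def by (simp add: fun_eq_iff)

lemma nr_minus: "nr N n (X - Y) = nr N n X - nr N n (Y::'a::group_add tmat)"
  unfolding nr_def by (auto simp: fun_eq_iff)

lemma nr_cong: "(\<And>I K. I \<in> idx N n \<Longrightarrow> K \<in> idx N n \<Longrightarrow> A I K = B I K) \<Longrightarrow> nr N n A = nr N n B"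
  unfolding nr_def by (simp add: fun_eq_iff)

lemma sum_delta_mul: "finite S \<Longrightarrow> (\<Sum>J\<in>S. (if I = J then 1 else 0) * f J) = (if I \<in> S then f I else (0::'a::semiring_1))"
proof -
  assume "finite S"
  have "(\<Sum>J\<in>S. (if I = J then 1 else 0) * f J) = (\<Sum>J\<in>S. if I = J then f J else 0)"
    by (rule sum.cong) auto
  also have "\<dots> = (if I \<in> S then f I else 0)" using \<open>finite S\<close> by (simp add: sum.delta)
  finally show ?thesis .
qed
lemma sum_delta_mul': "finite S \<Longrightarrow> (\<Sum>J\<in>S. f J * (if J = K then 1 else 0)) = (if K \<in> S then f K else (0::'a::semiring_1))"
proof -
  assume "finite S"
  have "(\<Sum>J\<in>S. f J * (if J = K then 1 else 0)) = (\<Sum>J\<in>S. if J = K then f J else 0)"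
    by (rule sum.cong) auto
  also have "\<dots> = (if K \<in> S then f K else 0)" using \<open>finite S\<close> by (simp add: sum.delta)
  finally show ?thesis .
qed

lemma nr_tm[simp]: "nr N n (tm N n X Y) = tm N n X Y" unfolding tm_def by simp

lemma tmul_nr_l: "I \<in> idx N n \<Longrightarrow> tmul N n (nr N n X) Y I K = tmul N n X Y I K"
  unfolding tmul_def nr_def by (intro sum.cong) auto
lemma tmul_nr_r: "K \<in> idx N n \<Longrightarrow> tmul N n X (nr N n Y) I K = tmul N n X Y I K"
  unfolding tmul_def nr_def by (intro sum.cong) auto

lemma tm_nr_l[simp]: "tm N n (nr N n X) Y = tm N n X Y"
  unfolding tm_def by (rule nr_cong) (simp add: tmul_nr_l)
lemma tm_nr_r[simp]: "tm N n X (nr N n Y) = tm N n X Y"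
  unfolding tm_def by (rule nr_cong) (simp add: tmul_nr_r)

lemma nr_tmul: "nr N n (tmul N n X Y) = tm N n (nr N n X) (nr N n Y)"
  by (simp add: tm_def[symmetric])

lemma tmul_assoc: "tmul N n (tmul N n X Y) Z = tmul N n X (tmul N n Y Z)"
proof (intro ext)
  fix I L
  have "tmul N n (tmul N n X Y) Z I L = (\<Sum>K\<in>idx N n. \<Sum>J\<in>idx N n. X I J * Y J K * Z K L)"
    unfolding tmul_def by (simp add: sum_distrib_right)
  also have "\<dots> = (\<Sum>J\<in>idx N n. \<Sum>K\<in>idx N n. X I J * Y J K * Z K L)"
    by (rule sum.swap)
  also have "\<dots> = tmul N n X (tmul N n Y Z) I L"
    unfolding tmul_def by (simp add: sum_distrib_left mult.assoc)
  finally show "tmul N n (tmul N n X Y) Z I L = tmul N n X (tmul N n Y Z) I L" .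
qed

lemma tm_assoc: "tm N n (tm N n X Y) Z = tm N n X (tm N n Y Z)"
proof -
  have "tm N n (tm N n X Y) Z = tm N n (tmul N n X Y) Z" unfolding tm_def[of N n X Y] by simp
  also have "\<dots> = tm N n X (tmul N n Y Z)" unfolding tm_def tmul_assoc ..
  also have "\<dots> = tm N n X (tm N n Y Z)" unfolding tm_def[of N n Y Z] by simp
  finally show ?thesis .
qed

lemma tmul_tid_l: "I \<in> idx N n \<Longrightarrow> tmul N n (tid::'a::semiring_1 tmat) X I K = X I K"
  unfolding tmul_def tid_def by (simp add: sum_delta_mul)
lemma tmul_tid_r: "K \<in> idx N n \<Longrightarrow> tmul N n X (tid::'a::semiring_1 tmat) I K = X I K"
  unfolding tmul_def tid_def by (simp add: sum_delta_mul')

lemma tm_tid_l[simp]: "tm N n (tid::'a::semiring_1 tmat) X = nr N n X"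
  unfolding tm_def nr_def by (auto simp: fun_eq_iff tmul_tid_l)
lemma tm_tid_r[simp]: "tm N n X (tid::'a::semiring_1 tmat) = nr N n X"
  unfolding tm_def nr_def by (auto simp: fun_eq_iff tmul_tid_r)

lemma nr_add: "nr N n (X + Y) = nr N n X + nr N n (Y::'a::monoid_add tmat)"
  unfolding nr_def by (auto simp: fun_eq_iff)

lemma tm_distL: "tm N n X (Y + Z) = tm N n X Y + tm N n X Z"
  unfolding tm_def nr_add[symmetric]
  by (rule nr_cong) (simp add: tmul_def distrib_left sum.distrib)
lemma tm_distR: "tm N n (X + Y) Z = tm N n X Z + tm N n Y Z"
  unfolding tm_def nr_add[symmetric]
  by (rule nr_cong) (simp add: tmul_def distrib_right sum.distrib)

lemma tm_scal_l: "tm N n (\<lambda>I J. s * tid I J) X = nr N n (\<lambda>I K. s * X I K)"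
  for s :: "'a::ring_1"
proof -
  have "tmul N n (\<lambda>I J. s * tid I J) X I K = s * X I K" if "I \<in> idx N n" for I K
  proof -
    have "tmul N n (\<lambda>I J. s * tid I J) X I K = s * (\<Sum>J\<in>idx N n. (if I = J then 1 else 0) * X J K)"
      unfolding tmul_def sum_distrib_left by (intro sum.cong) (auto simp: tid_def)
    then show ?thesis using that by (simp add: sum_delta_mul)
  qed
  then show ?thesis unfolding tm_def by (intro nr_cong) simp
qed
lemma tm_scal_r: "tm N n X (\<lambda>I J. s * tid I J) = nr N n (\<lambda>I K. X I K * s)"
  for s :: "'a::ring_1"
proof -
  have "tmul N n X (\<lambda>I J. s * tid I J) I K = X I K * s" if "K \<in> idx N n" for I K
  proof -
    have "tmul N n X (\<lambda>I J. s * tid I J) I K = (\<Sum>J\<in>idx N n. X I J * (if J = K then 1 else 0)) * s"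
      unfolding tmul_def tid_def sum_distrib_right
      by (intro sum.cong) (auto simp: tid_def)
    then show ?thesis using that by (simp add: sum_delta_mul')
  qed
  then show ?thesis unfolding tm_def by (intro nr_cong) simp
qed


definition agoff :: "nat \<Rightarrow> nat \<Rightarrow> nat list \<Rightarrow> nat list \<Rightarrow> bool" where
  "agoff k m I J \<longleftrightarrow> (\<forall>p<length I. (p < k \<or> k+m \<le> p) \<longrightarrow> I!p = J!p)"

definition lift :: "nat \<Rightarrow> nat \<Rightarrow> 'a::zero tmat \<Rightarrow> 'a tmat" where
  "lift k m X I J = (if agoff k m I J then X (take m (drop k I)) (take m (drop k J)) else 0)"

lemma win_nth: "k+m \<le> length I \<Longrightarrow> p < m \<Longrightarrow> take m (drop k I) ! p = I ! (k+p)"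
  by simp

lemma win_nth': "k \<le> p \<Longrightarrow> p < k+m \<Longrightarrow> k+m \<le> length I \<Longrightarrow> take m (drop k I) ! (p-k) = I ! p"
  using nth_take[of "p-k" m "drop k I"] nth_drop[of k I "p-k"] by simp

lemma win_idx: "I \<in> idx N n \<Longrightarrow> k+m \<le> n \<Longrightarrow> take m (drop k I) \<in> idx N m"
  unfolding idx_def using set_take_subset set_drop_subset by fastforce

lemma hV_idx: "I \<in> idx N n \<Longrightarrow> k+m \<le> n \<Longrightarrow> V \<in> idx N m \<Longrightarrow> take k I @ V @ drop (k+m) I \<in> idx N n"
  unfolding idx_def using set_take_subset set_drop_subset by fastforce

lemma hV_agoff: "I \<in> idx N n \<Longrightarrow> k+m \<le> n \<Longrightarrow> V \<in> idx N m \<Longrightarrow> agoff k m I (take k I @ V @ drop (k+m) I)"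
  unfolding agoff_def idx_def by (auto simp: nth_append)

lemma hV_win: "length V = m \<Longrightarrow> k \<le> length I \<Longrightarrow> take m (drop k (take k I @ V @ W)) = V"
  by simp

lemma hV_inv: "I \<in> idx N n \<Longrightarrow> J \<in> idx N n \<Longrightarrow> k+m \<le> n \<Longrightarrow> agoff k m I J \<Longrightarrow>
   take k I @ take m (drop k J) @ drop (k+m) I = J"
  unfolding agoff_def idx_def
  by (intro nth_equalityI) (auto simp: nth_append)

lemma agoff_trans: "length I = length J \<Longrightarrow> agoff k m I J \<Longrightarrow> agoff k m J K \<Longrightarrow> agoff k m I K"
  unfolding agoff_def by auto
lemma agoff_sym: "length I = length J \<Longrightarrow> agoff k m I J \<Longrightarrow> agoff k m J I"
  unfolding agoff_def by auto

lemma lift_mul: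
  assumes km: "k+m \<le> n" and I: "I \<in> idx N n" and K: "K \<in> idx N n"
  shows "tmul N n (lift k m X) (lift k m Y) I K = lift k m (tmul N m X (Y::'a::semiring_0 tmat)) I K"
proof (cases "agoff k m I K")
  case True
  let ?w = "\<lambda>J. take m (drop k J)"
  let ?g = "\<lambda>J. X (?w I) (?w J) * Y (?w J) (?w K)"
  let ?T = "{J \<in> idx N n. agoff k m I J}"
  have "tmul N n (lift k m X) (lift k m Y) I K = (\<Sum>J\<in>idx N n. if agoff k m I J then ?g J else 0)"
    unfolding tmul_def
  proof (intro sum.cong refl)
    fix J assume J: "J \<in> idx N n"
    show "lift k m X I J * lift k m Y J K = (if agoff k m I J then ?g J else 0)"
    proof (cases "agoff k m I J")
      case True
      then have "agoff k m J K" using agoff_trans[OF _ agoff_sym \<open>agoff k m I K\<close>] I J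
        by (simp add: idx_len)
      then show ?thesis using True unfolding lift_def by simp
    qed (simp add: lift_def)
  qed
  also have "\<dots> = sum ?g ?T" by (simp add: sum.inter_filter)
  also have "\<dots> = (\<Sum>V\<in>idx N m. ?g (take k I @ V @ drop (k+m) I))"
  proof (rule sum.reindex_bij_betw[symmetric])
    show "bij_betw (\<lambda>V. take k I @ V @ drop (k+m) I) (idx N m) ?T"
    proof (rule bij_betw_byWitness[where f'="?w"])
      show "\<forall>a\<in>idx N m. ?w (take k I @ a @ drop (k + m) I) = a"
        using I km by (auto simp: idx_len)
      show "\<forall>a'\<in>?T. take k I @ ?w a' @ drop (k + m) I = a'"
        using I km hV_inv by blast
      show "(\<lambda>V. take k I @ V @ drop (k + m) I) ` idx N m \<subseteq> ?T"
        using I km hV_idx hV_agoff by blast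
      show "?w ` ?T \<subseteq> idx N m" using km win_idx by blast
    qed
  qed
  also have "\<dots> = (\<Sum>V\<in>idx N m. X (?w I) V * Y V (?w K))"
    using I km by (intro sum.cong refl) (simp add: idx_len)
  also have "\<dots> = lift k m (tmul N m X Y) I K" using True unfolding lift_def tmul_def by simp
  finally show ?thesis .
next
  case False
  have "lift k m X I J * lift k m Y J K = 0" if J: "J \<in> idx N n" for J
  proof (cases "agoff k m I J \<and> agoff k m J K")
    case True then show ?thesis using False agoff_trans[of I J k m K] I J by (simp add: idx_len)
  qed (auto simp: lift_def)
  then show ?thesis using False unfolding tmul_def lift_def by simp
qed

lemma nr_lift_mul: "k+m \<le> n \<Longrightarrow>
  nr N n (lift k m (tmul N m X (Y::'a::semiring_0 tmat))) = tm N n (lift k m X) (lift k m Y)"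
  unfolding tm_def by (intro nr_cong) (simp add: lift_mul)

lemma nr_lift_cong: "teq N m X Y \<Longrightarrow> k+m \<le> n \<Longrightarrow> nr N n (lift k m X) = nr N n (lift k m Y)"
  by (intro nr_cong) (simp add: lift_def teq_def win_idx)

lemma lift_add: "lift k m (X + Y) = lift k m X + lift k m (Y::'a::monoid_add tmat)"
  unfolding lift_def by (simp add: fun_eq_iff)

lemma lift_tsmul: "lift k m (tsmul c X) = tsmul c (lift k m (X::'a::mult_zero tmat))"
  unfolding lift_def tsmul_def by (simp add: fun_eq_iff)

lemma lift_tmap: "f 0 = 0 \<Longrightarrow> tmap f (lift k m X) = lift k m (tmap f X)"
  unfolding lift_def tmap_def by (simp add: fun_eq_iff)

lemma lift_op2:
  assumes "I \<in> idx N n" "J \<in> idx N n" "k \<le> j" "j+2 \<le> k+m" "k+m \<le> n"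
  shows "lift k m (op2 X (j-k)) I J = op2 X j I J"
proof -
  have lI: "length I = n" "length J = n" using assms by (auto simp: idx_len)
  have c: "(agoff k m I J \<and> (\<forall>p<length (take m (drop k I)). p \<noteq> j-k \<and> p \<noteq> Suc (j-k) \<longrightarrow>
            take m (drop k I) ! p = take m (drop k J) ! p))
        \<longleftrightarrow> (\<forall>p<length I. p \<noteq> j \<and> p \<noteq> Suc j \<longrightarrow> I ! p = J ! p)"
  proof
    assume h: "agoff k m I J \<and> (\<forall>p<length (take m (drop k I)). p \<noteq> j-k \<and> p \<noteq> Suc (j-k) \<longrightarrow>
            take m (drop k I) ! p = take m (drop k J) ! p)"
    show "\<forall>p<length I. p \<noteq> j \<and> p \<noteq> Suc j \<longrightarrow> I ! p = J ! p"
    proof (intro allI impI)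
      fix p assume p: "p < length I" "p \<noteq> j \<and> p \<noteq> Suc j"
      show "I ! p = J ! p"
      proof (cases "p < k \<or> k+m \<le> p")
        case True then show ?thesis using h p unfolding agoff_def by auto
      next
        case False
        then have "p - k < m" "p - k \<noteq> j - k" "p - k \<noteq> Suc (j-k)" using p assms by auto
        then have "take m (drop k I) ! (p-k) = take m (drop k J) ! (p-k)" using h lI assms by auto
        then show ?thesis using False lI assms win_nth'[of k p m I] win_nth'[of k p m J] by simp
      qed
    qed
  next
    assume h: "\<forall>p<length I. p \<noteq> j \<and> p \<noteq> Suc j \<longrightarrow> I ! p = J ! p"
    have "agoff k m I J" unfolding agoff_def using h assms by auto
    moreover have "\<forall>p<length (take m (drop k I)). p \<noteq> j-k \<and> p \<noteq> Suc (j-k) \<longrightarrow>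
            take m (drop k I) ! p = take m (drop k J) ! p"
    proof (intro allI impI)
      fix p assume p: "p < length (take m (drop k I))" "p \<noteq> j-k \<and> p \<noteq> Suc (j-k)"
      then have "k + p < length I" "k+p \<noteq> j" "k+p \<noteq> Suc j" using lI assms by auto
      then show "take m (drop k I) ! p = take m (drop k J) ! p" using h p lI assms by auto
    qed
    ultimately show "agoff k m I J \<and> (\<forall>p<length (take m (drop k I)). p \<noteq> j-k \<and> p \<noteq> Suc (j-k) \<longrightarrow>
            take m (drop k I) ! p = take m (drop k J) ! p)" by blast
  qed
  have v: "take m (drop k I) ! (j-k) = I ! j" "take m (drop k I) ! Suc (j-k) = I ! Suc j"
          "take m (drop k J) ! (j-k) = J ! j" "take m (drop k J) ! Suc (j-k) = J ! Suc j"
    using lI assms by auto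
  show ?thesis unfolding lift_def op2_def using c v by auto
qed

lemma nr_lift_op2: "k \<le> j \<Longrightarrow> j+2 \<le> k+m \<Longrightarrow> k+m \<le> n \<Longrightarrow>
  nr N n (lift k m (op2 X (j-k))) = nr N n (op2 X j)"
  by (intro nr_cong) (simp add: lift_op2)

lemma tl_eq_iff: "length I = length J \<Longrightarrow> (tl I = tl J) \<longleftrightarrow> (\<forall>p. 1 \<le> p \<and> p < length I \<longrightarrow> I!p = J!p)"
proof
  assume "length I = length J" "tl I = tl J"
  show "\<forall>p. 1 \<le> p \<and> p < length I \<longrightarrow> I!p = J!p"
  proof (intro allI impI)
    fix p assume p: "1 \<le> p \<and> p < length I"
    then obtain q where q: "p = Suc q" by (cases p) auto
    have "I ! p = tl I ! q" using p q by (simp add: nth_tl)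
    also have "\<dots> = tl J ! q" using \<open>tl I = tl J\<close> by simp
    also have "\<dots> = J ! p" using p q \<open>length I = length J\<close> by (simp add: nth_tl)
    finally show "I ! p = J ! p" .
  qed
next
  assume h: "length I = length J" "\<forall>p. 1 \<le> p \<and> p < length I \<longrightarrow> I!p = J!p"
  show "tl I = tl J"
    by (rule nth_equalityI) (use h in \<open>auto simp: nth_tl\<close>)
qed

lemma lift_op1:
  assumes "I \<in> idx N n" "J \<in> idx N n" "1 \<le> m" "m \<le> n"
  shows "lift 0 m (op1 A) I J = op1 A I J"
proof -
  have lI: "length I = n" "length J = n" using assms by (auto simp: idx_len)
  have c: "(agoff 0 m I J \<and> tl (take m I) = tl (take m J)) \<longleftrightarrow> tl I = tl J"
    using lI assms unfolding agoff_def
    by (auto simp: tl_eq_iff)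
  have v: "hd (take m I) = hd I" "hd (take m J) = hd J" using assms by auto
  show ?thesis unfolding lift_def op1_def using c v by auto
qed

lemma nr_lift_op1: "1 \<le> m \<Longrightarrow> m \<le> n \<Longrightarrow> nr N n (lift 0 m (op1 A)) = nr N n (op1 A)"
  by (intro nr_cong) (simp add: lift_op1)

lemma lift_tid:
  assumes "I \<in> idx N n" "J \<in> idx N n" "k+m \<le> n"
  shows "lift k m (tid::'a::{zero,one} tmat) I J = tid I J"
proof -
  have lI: "length I = n" "length J = n" using assms by (auto simp: idx_len)
  have "(agoff k m I J \<and> take m (drop k I) = take m (drop k J)) \<longleftrightarrow> I = J"
  proof
    assume h: "agoff k m I J \<and> take m (drop k I) = take m (drop k J)"
    show "I = J"
    proof (rule nth_equalityI)
      show "length I = length J" using lI by simp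
      fix p assume p: "p < length I"
      show "I ! p = J ! p"
      proof (cases "p < k \<or> k+m \<le> p")
        case True then show ?thesis using h p unfolding agoff_def by auto
      next
        case False
        then have "take m (drop k I) ! (p-k) = take m (drop k J) ! (p-k)" using h by simp
        then show ?thesis using False lI assms p win_nth'[of k p m I] win_nth'[of k p m J] by simp
      qed
    qed
  qed (simp add: agoff_def)
  then show ?thesis unfolding lift_def tid_def by auto
qed

lemma nr_lift_tid: "k+m \<le> n \<Longrightarrow> nr N n (lift k m (tid::'a::{zero,one} tmat)) = nr N n tid"
  by (intro nr_cong) (simp add: lift_tid)


definition locop :: "nat set \<Rightarrow> 'a::zero tmat \<Rightarrow> 'a tmat" where
  "locop S F I J = (if (\<forall>p<length I. p \<notin> S \<longrightarrow> I!p = J!p) then F I J else 0)"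

definition dep :: "nat set \<Rightarrow> 'a tmat \<Rightarrow> bool" where
  "dep S F \<longleftrightarrow> (\<forall>I J I' J'. (\<forall>p\<in>S. I!p = I'!p \<and> J!p = J'!p) \<longrightarrow> F I J = F I' J')"

lemma loc_mul:
  assumes ST: "S \<inter> T = {}" "S \<union> T \<subseteq> {..<n}" and dF: "dep S F" and dG: "dep T G"
    and I: "I \<in> idx N n" and K: "K \<in> idx N n"
  shows "tmul N n (locop S F) (locop T G) I K =
    (if (\<forall>p<n. p \<notin> S \<union> T \<longrightarrow> I!p = K!p) then F I K * G I K else (0::'a::semiring_0))"
proof -
  have lI: "length I = n" "length K = n" using I K by (auto simp: idx_len)
  define J0 where "J0 = map (\<lambda>p. if p \<in> S then K!p else I!p) [0..<n]"
  have J0: "J0 \<in> idx N n" unfolding J0_def idx_def using I K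
    by (auto simp: idx_nth)
  have J0n: "p < n \<Longrightarrow> J0 ! p = (if p \<in> S then K!p else I!p)" for p unfolding J0_def by simp
  let ?c1 = "\<lambda>J. \<forall>p<n. p \<notin> S \<longrightarrow> I!p = J!p"
  let ?c2 = "\<lambda>J. \<forall>p<n. p \<notin> T \<longrightarrow> J!p = K!p"
  let ?f = "\<lambda>J. locop S F I J * locop T G J K"
  show ?thesis
  proof (cases "\<forall>p<n. p \<notin> S \<union> T \<longrightarrow> I!p = K!p")
    case True
    have z: "?f J = (if J = J0 then ?f J0 else 0)" if J: "J \<in> idx N n" for J
    proof (cases "?c1 J \<and> ?c2 J")
      case True
      have "J = J0"
      proof (rule nth_equalityI)
        show "length J = length J0" using J J0 by (simp add: idx_len)
        fix p assume "p < length J"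
        then have p: "p < n" using J by (simp add: idx_len)
        show "J ! p = J0 ! p"
        proof (cases "p \<in> S")
          case True then have "p \<notin> T" using ST by auto
          then show ?thesis using \<open>?c1 J \<and> ?c2 J\<close> p J0n \<open>p \<in> S\<close> by simp
        next
          case False then show ?thesis using \<open>?c1 J \<and> ?c2 J\<close> p J0n by simp
        qed
      qed
      then show ?thesis by simp
    next
      case False
      then have "?f J = 0" unfolding locop_def using J lI by (auto simp: idx_len)
      then show ?thesis by (cases "J = J0") auto
    qed
    have c1: "?c1 J0" using J0n by simp
    have c2: "?c2 J0" using J0n True by auto
    have "tmul N n (locop S F) (locop T G) I K = (\<Sum>J\<in>idx N n. if J = J0 then ?f J0 else 0)"
      unfolding tmul_def by (intro sum.cong refl z)
    also have "\<dots> = ?f J0" using J0 by (simp add: sum.delta')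
    also have "\<dots> = F I J0 * G J0 K" using c1 c2 lI unfolding locop_def using J0 by (simp add: idx_len)
    also have "F I J0 = F I K" using dF ST J0n unfolding dep_def by (metis lessThan_iff subset_iff UnI1)
    also have "G J0 K = G I K" using dG ST J0n unfolding dep_def
      by (metis disjoint_iff lessThan_iff subset_iff UnI2)
    finally show ?thesis using True by simp
  next
    case False
    have "?f J = 0" if J: "J \<in> idx N n" for J
    proof (cases "?c1 J \<and> ?c2 J")
      case True
      then have "\<forall>p<n. p \<notin> S \<union> T \<longrightarrow> I!p = K!p" by auto
      then show ?thesis using False by simp
    next
      case False
      then show ?thesis unfolding locop_def using J lI by (auto simp: idx_len)
    qed
    then show ?thesis unfolding tmul_def using False by auto
  qed
qed

lemma op2_loc: "op2 X j = locop {j, Suc j} (\<lambda>I J. X (I!j) (I!Suc j) (J!j) (J!Suc j))"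
  unfolding op2_def locop_def by (simp add: fun_eq_iff)

lemma dep_op2: "dep {j, Suc j} (\<lambda>I J. f (X (I!j) (I!Suc j) (J!j) (J!Suc j)))"
  unfolding dep_def by auto

lemma op1_loc: "1 \<le> n \<Longrightarrow> nr N n (op1 A) = nr N n (locop {0} (\<lambda>I J. A (I!0) (J!0)))"
proof (intro nr_cong)
  fix I J assume "1 \<le> n" "I \<in> idx N n" "J \<in> idx N n"
  then have l0: "length I = n" "length J = n" by (auto simp: idx_len)
  then have l: "length I = n" "length J = n" "I \<noteq> []" "J \<noteq> []" using \<open>1 \<le> n\<close> by auto
  have "tl I = tl J \<longleftrightarrow> (\<forall>p<length I. p \<notin> {0} \<longrightarrow> I!p = J!p)"
    using l by (auto simp: tl_eq_iff)
  moreover have "hd I = I ! 0" "hd J = J ! 0" using l by (auto simp: hd_conv_nth)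
  ultimately show "op1 A I J = locop {0} (\<lambda>I J. A (I!0) (J!0)) I J"
    unfolding op1_def locop_def by auto
qed

lemma dep_op1: "dep {0} (\<lambda>I J. A (I!0) (J!0))"
  unfolding dep_def by auto

lemma tmap_locop: "f 0 = 0 \<Longrightarrow> tmap f (locop S F) = locop S (\<lambda>I J. f (F I J))"
  unfolding tmap_def locop_def by (auto simp: fun_eq_iff)

lemma loc_comm:
  assumes "S \<inter> T = {}" "S \<union> T \<subseteq> {..<n}" "dep S F" "dep T G"
    and c: "\<And>I K. F I K * G I K = G I K * (F I K :: 'a::semiring_0)"
  shows "tm N n (locop S F) (locop T G) = tm N n (locop T G) (locop S F)"
  unfolding tm_def
proof (intro nr_cong)
  fix I K assume "I \<in> idx N n" "K \<in> idx N n"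
  moreover have "T \<inter> S = {}" "T \<union> S \<subseteq> {..<n}" using assms by auto
  ultimately show "tmul N n (locop S F) (locop T G) I K = tmul N n (locop T G) (locop S F) I K"
    using assms loc_mul[of S T n F G I N K] loc_mul[of T S n G F I N K] by (auto simp: Un_commute c)
qed


lemma nr_tsmul: "nr N n (tsmul c X) = tsmul c (nr N n (X::'a::mult_zero tmat))"
  unfolding nr_def tsmul_def by (simp add: fun_eq_iff)

lemma nr_lift_mul': "k+m \<le> n \<Longrightarrow>
  nr N n (lift k m (tmul N m X (Y::'a::semiring_0 tmat))) = tm N n (nr N n (lift k m X)) (nr N n (lift k m Y))"
  by (simp add: nr_lift_mul)

lemma nr_lift_add: "nr N n (lift k m (X + Y)) = nr N n (lift k m X) + nr N n (lift k m (Y::'a::monoid_add tmat))"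
  by (simp add: lift_add nr_add)


lemma tadd_plus: "tadd X Y = X + Y"
  unfolding tadd_def by (simp add: fun_eq_iff)
lemma tminus_minus: "tminus X Y = X - Y"
  unfolding tminus_def by (simp add: fun_eq_iff)

lemma nr_lift_op2_0: "k+2 \<le> n \<Longrightarrow> nr N n (lift k 2 (op2 X 0)) = nr N n (op2 X k)"
  using nr_lift_op2[of k k 2 n N X] by simp
lemma nr_lift3_op2_0: "k+3 \<le> n \<Longrightarrow> nr N n (lift k 3 (op2 X 0)) = nr N n (op2 X k)"
  using nr_lift_op2[of k k 3 n N X] by simp
lemma nr_lift3_op2_1: "k+3 \<le> n \<Longrightarrow> nr N n (lift k 3 (op2 X 1)) = nr N n (op2 X (Suc k))"
  using nr_lift_op2[of k "Suc k" 3 n N X] by simp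
lemma nr_lift3_op2_1': "k+3 \<le> n \<Longrightarrow> nr N n (lift k 3 (op2 X (Suc 0))) = nr N n (op2 X (Suc k))"
  using nr_lift_op2[of k "Suc k" 3 n N X] by simp


context
  fixes N n :: nat and q :: complex and R Ri :: "nat \<Rightarrow> nat \<Rightarrow> nat \<Rightarrow> nat \<Rightarrow> complex"
  assumes H: "skew_inv_hecke N q R Ri"
begin

lemma H1: "teq N 2 (tmul N 2 (op2 R 0) (op2 Ri 0)) tid"
  using H[unfolded skew_inv_hecke_def] by (rule conjunct1)
lemma H2: "teq N 2 (tmul N 2 (op2 Ri 0) (op2 R 0)) tid"
  using conjunct1[OF conjunct2[OF H[unfolded skew_inv_hecke_def]]] .
lemma H3: "teq N 3 (tmul N 3 (op2 R 0) (tmul N 3 (op2 R 1) (op2 R 0)))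
             (tmul N 3 (op2 R 1) (tmul N 3 (op2 R 0) (op2 R 1)))"
  using conjunct1[OF conjunct2[OF conjunct2[OF H[unfolded skew_inv_hecke_def]]]] .
lemma H4: "teq N 2 (tmul N 2 (op2 R 0) (op2 R 0)) (tadd tid (tsmul (q - inverse q) (op2 R 0)))"
  using conjunct1[OF conjunct2[OF conjunct2[OF conjunct2[OF H[unfolded skew_inv_hecke_def]]]]] .

lemma inv1c: "k+2 \<le> n \<Longrightarrow> tm N n (op2 R k) (op2 Ri k) = nr N n tid"
proof -
  assume k: "k+2 \<le> n"
  have "tm N n (op2 R k) (op2 Ri k) = tm N n (nr N n (lift k 2 (op2 R 0))) (nr N n (lift k 2 (op2 Ri 0)))"
    using k by (simp add: nr_lift_op2_0)
  also have "\<dots> = nr N n (lift k 2 (tmul N 2 (op2 R 0) (op2 Ri 0)))" using k by (simp add: nr_lift_mul)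
  also have "\<dots> = nr N n (lift k 2 tid)" using H1 k by (intro nr_lift_cong) auto
  also have "\<dots> = nr N n tid" using k by (simp add: nr_lift_tid)
  finally show ?thesis .
qed

lemma inv2c: "k+2 \<le> n \<Longrightarrow> tm N n (op2 Ri k) (op2 R k) = nr N n tid"
proof -
  assume k: "k+2 \<le> n"
  have "tm N n (op2 Ri k) (op2 R k) = tm N n (nr N n (lift k 2 (op2 Ri 0))) (nr N n (lift k 2 (op2 R 0)))"
    using k by (simp add: nr_lift_op2_0)
  also have "\<dots> = nr N n (lift k 2 (tmul N 2 (op2 Ri 0) (op2 R 0)))" using k by (simp add: nr_lift_mul)
  also have "\<dots> = nr N n (lift k 2 tid)" using H2 k by (intro nr_lift_cong) auto
  also have "\<dots> = nr N n tid" using k by (simp add: nr_lift_tid)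
  finally show ?thesis .
qed

lemma heckec: "k+2 \<le> n \<Longrightarrow> tm N n (op2 R k) (op2 R k) = nr N n tid + tsmul (q - inverse q) (nr N n (op2 R k))"
proof -
  assume k: "k+2 \<le> n"
  have "tm N n (op2 R k) (op2 R k) = tm N n (nr N n (lift k 2 (op2 R 0))) (nr N n (lift k 2 (op2 R 0)))"
    using k by (simp add: nr_lift_op2_0)
  also have "\<dots> = nr N n (lift k 2 (tmul N 2 (op2 R 0) (op2 R 0)))" using k by (simp add: nr_lift_mul)
  also have "\<dots> = nr N n (lift k 2 (tadd tid (tsmul (q - inverse q) (op2 R 0))))"
    using H4 k by (intro nr_lift_cong) auto
  also have "\<dots> = nr N n tid + tsmul (q - inverse q) (nr N n (op2 R k))"
    using k by (simp add: tadd_plus lift_add nr_add nr_lift_tid lift_tsmul nr_tsmul nr_lift_op2_0)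
  finally show ?thesis .
qed

lemma braidc: "k+3 \<le> n \<Longrightarrow>
  tm N n (op2 R k) (tm N n (op2 R (Suc k)) (op2 R k)) = tm N n (op2 R (Suc k)) (tm N n (op2 R k) (op2 R (Suc k)))"
proof -
  assume k: "k+3 \<le> n"
  have "tm N n (op2 R k) (tm N n (op2 R (Suc k)) (op2 R k)) =
     nr N n (lift k 3 (tmul N 3 (op2 R 0) (tmul N 3 (op2 R 1) (op2 R 0))))"
    using k by (simp add: nr_lift_mul' nr_lift3_op2_0 nr_lift3_op2_1 nr_lift3_op2_1')
  also have "\<dots> = nr N n (lift k 3 (tmul N 3 (op2 R 1) (tmul N 3 (op2 R 0) (op2 R 1))))"
    using H3 k by (intro nr_lift_cong) auto
  also have "\<dots> = tm N n (op2 R (Suc k)) (tm N n (op2 R k) (op2 R (Suc k)))"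
    using k by (simp add: nr_lift_mul' nr_lift3_op2_0 nr_lift3_op2_1 nr_lift3_op2_1')
  finally show ?thesis .
qed

end

lemma farc: "i+2 \<le> j \<Longrightarrow> j+2 \<le> n \<Longrightarrow>
  tm N n (tmap f (op2 X i)) (tmap f (op2 X j)) = tm N n (tmap f (op2 X j)) (tmap f (op2 X i))"
  if "f 0 = 0" "\<And>a b. f a * f b = f b * (f a :: 'a::semiring_0)"
proof -
  assume ij: "i+2 \<le> j" "j+2 \<le> n"
  have d1: "dep {i, Suc i} (\<lambda>I J. f (X (I!i) (I!Suc i) (J!i) (J!Suc i)))" by (rule dep_op2)
  have d2: "dep {j, Suc j} (\<lambda>I J. f (X (I!j) (I!Suc j) (J!j) (J!Suc j)))" by (rule dep_op2)
  show ?thesis unfolding op2_loc tmap_locop[of f, OF that(1)]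
    apply (rule loc_comm[OF _ _ d1 d2])
    using ij apply auto[2]
    by (rule that(2))
qed

lemma loc1c: "1 \<le> j \<Longrightarrow> j+2 \<le> n \<Longrightarrow>
  tm N n (op1 A) (tmap f (op2 X j)) = tm N n (tmap f (op2 X j)) (op1 A)"
  if "f 0 = 0" "\<And>a b. a * f b = f b * (a :: 'a::semiring_0)"
proof -
  assume ij: "1 \<le> j" "j+2 \<le> n"
  have d1: "dep {0} (\<lambda>I J. A (I!0) (J!0))" by (rule dep_op1)
  have d2: "dep {j, Suc j} (\<lambda>I J. f (X (I!j) (I!Suc j) (J!j) (J!Suc j)))" by (rule dep_op2)
  have "tm N n (op1 A) (tmap f (op2 X j)) = tm N n (nr N n (op1 A)) (tmap f (op2 X j))" by simp
  also have "\<dots> = tm N n (locop {0} (\<lambda>I J. A (I!0) (J!0))) (tmap f (op2 X j))"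
    using ij by (simp only: op1_loc) simp
  also have "\<dots> = tm N n (tmap f (op2 X j)) (locop {0} (\<lambda>I J. A (I!0) (J!0)))"
    unfolding op2_loc tmap_locop[of f, OF that(1)]
    apply (rule loc_comm[OF _ _ d1 d2])
    using ij apply auto[2]
    by (rule that(2))
  also have "\<dots> = tm N n (tmap f (op2 X j)) (nr N n (op1 A))"
    using ij by (simp only: op1_loc) simp
  finally show ?thesis by simp
qed


context
  fixes sc :: "complex \<Rightarrow> 'a::ring_1"
  assumes S: "complex_alg sc"
begin

lemma sc_1[simp]: "sc 1 = 1" using S unfolding complex_alg_def by blast
lemma sc_add[simp]: "sc (x + y) = sc x + sc y" using S unfolding complex_alg_def by blast
lemma sc_mult[simp]: "sc (x * y) = sc x * sc y" using S unfolding complex_alg_def by blast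
lemma sc_central: "sc x * a = a * sc x" using S unfolding complex_alg_def by blast
lemma sc_0[simp]: "sc 0 = 0"
  using sc_add[of 0 0] by simp
lemma sc_minus[simp]: "sc (x - y) = sc x - sc y"
  using sc_add[of "x - y" y] by (simp add: eq_diff_eq)
lemma sc_sum: "sc (sum f A) = (\<Sum>x\<in>A. sc (f x))"
  by (induction A rule: infinite_finite_induct) auto

lemma tmap_tmul: "tmap sc (tmul N n X Y) = tmul N n (tmap sc X) (tmap sc Y)"
  unfolding tmap_def tmul_def by (simp add: fun_eq_iff sc_sum)
lemma tmap_nr: "tmap sc (nr N n X) = nr N n (tmap sc X)"
  unfolding tmap_def nr_def by (rule ext)+ simp
lemma tmap_tm: "tmap sc (tm N n X Y) = tm N n (tmap sc X) (tmap sc Y)"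
  unfolding tm_def by (simp add: tmap_nr tmap_tmul)
lemma tmap_tid[simp]: "tmap sc tid = tid"
  unfolding tmap_def tid_def by (simp add: fun_eq_iff)
lemma tmap_add: "tmap sc (X + Y) = tmap sc X + tmap sc Y"
  unfolding tmap_def plus_fun_def by simp

lemma sc_tm: "tm N n (nr N n (tmap sc X)) (nr N n (tmap sc Y)) = tmap sc (tm N n X Y)"
  by (simp add: tmap_tm)

end

lemma idx1: "idx N 1 = (\<lambda>c. [c]) ` {..<N}"
proof (intro set_eqI iffI)
  fix x assume "x \<in> idx N 1"
  then obtain c where "x = [c]" "c < N" unfolding idx_def by (auto simp: length_Suc_conv)
  then show "x \<in> (\<lambda>c. [c]) ` {..<N}" by auto
qed (auto simp: idx_def)

lemma op1_mul1: "teq N 1 (tmul N 1 (op1 A) (op1 B)) (op1 (\<lambda>i j. \<Sum>k<N. A i k * B k j))"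
  unfolding teq_def
proof (intro ballI)
  fix I K assume I: "I \<in> idx N 1" and K: "K \<in> idx N 1"
  then obtain a b where ab: "I = [a]" "K = [b]" unfolding idx1 by auto
  have "tmul N 1 (op1 A) (op1 B) I K = (\<Sum>c\<in>{..<N}. op1 A [a] [c] * op1 B [c] [b])"
    unfolding tmul_def idx1 ab by (subst sum.reindex) (auto simp: inj_on_def)
  also have "\<dots> = (\<Sum>c<N. A a c * B c b)" unfolding op1_def by simp
  finally show "tmul N 1 (op1 A) (op1 B) I K = op1 (\<lambda>i j. \<Sum>k<N. A i k * B k j) I K"
    unfolding ab op1_def by simp
qed

lemma op1_mul: "1 \<le> n \<Longrightarrow> tm N n (op1 A) (op1 B) = nr N n (op1 (\<lambda>i j. \<Sum>k<N. A i k * B k j))"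
proof -
  assume n: "1 \<le> n"
  have "tm N n (op1 A) (op1 B) = tm N n (nr N n (lift 0 1 (op1 A))) (nr N n (lift 0 1 (op1 B)))"
    using n by (simp add: nr_lift_op1)
  also have "\<dots> = nr N n (lift 0 1 (tmul N 1 (op1 A) (op1 B)))" using n by (simp add: nr_lift_mul)
  also have "\<dots> = nr N n (lift 0 1 (op1 (\<lambda>i j. \<Sum>k<N. A i k * B k j)))"
    using n op1_mul1 by (intro nr_lift_cong) auto
  also have "\<dots> = nr N n (op1 (\<lambda>i j. \<Sum>k<N. A i k * B k j))" using n by (simp add: nr_lift_op1)
  finally show ?thesis .
qed


definition rrm :: "nat \<Rightarrow> nat \<Rightarrow> (complex \<Rightarrow> 'a::ring_1) \<Rightarrow> (nat \<Rightarrow> nat \<Rightarrow> nat \<Rightarrow> nat \<Rightarrow> complex) \<Rightarrow> nat \<Rightarrow> 'a tmat" where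
  "rrm N n sc X k = nr N n (tmap sc (op2 X k))"
definition scm :: "nat \<Rightarrow> nat \<Rightarrow> 'a::ring_1 \<Rightarrow> 'a tmat" where
  "scm N n s = nr N n (\<lambda>I J. s * tid I J)"

lemma tm_scm_l: "tm N n (scm N n s) X = nr N n (\<lambda>I K. s * X I K)"
  unfolding scm_def by (simp add: tm_scal_l)
lemma tm_scm_r: "tm N n X (scm N n s) = nr N n (\<lambda>I K. X I K * s)"
  unfolding scm_def by (simp add: tm_scal_r)

context
  fixes N n :: nat and q :: complex and R Ri :: "nat \<Rightarrow> nat \<Rightarrow> nat \<Rightarrow> nat \<Rightarrow> complex"
    and sc :: "complex \<Rightarrow> 'a::ring_1"
  assumes H: "skew_inv_hecke N q R Ri" and S: "complex_alg sc"
begin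

lemma sc_tm': "tm N n (tmap sc X) (tmap sc Y) = tmap sc (tm N n X Y)"
  using tmap_tm[OF S] by simp

lemma rr_inv1: "k+2 \<le> n \<Longrightarrow> tm N n (rrm N n sc R k) (rrm N n sc Ri k) = nr N n tid"
  unfolding rrm_def using inv1c[OF H] by (simp add: sc_tm' tmap_nr[OF S] tmap_tid[OF S])
lemma rr_inv2: "k+2 \<le> n \<Longrightarrow> tm N n (rrm N n sc Ri k) (rrm N n sc R k) = nr N n tid"
  unfolding rrm_def using inv2c[OF H] by (simp add: sc_tm' tmap_nr[OF S] tmap_tid[OF S])

lemma rr_hecke: "k+2 \<le> n \<Longrightarrow> tm N n (rrm N n sc R k) (rrm N n sc R k) =
   nr N n tid + tm N n (scm N n (sc (q - inverse q))) (rrm N n sc R k)"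
proof -
  assume k: "k+2 \<le> n"
  have "tm N n (rrm N n sc R k) (rrm N n sc R k) = tmap sc (tm N n (op2 R k) (op2 R k))"
    unfolding rrm_def by (simp add: sc_tm')
  also have "\<dots> = tmap sc (nr N n tid + tsmul (q - inverse q) (nr N n (op2 R k)))"
    using heckec[OF H k] by simp
  also have "\<dots> = nr N n tid + tm N n (scm N n (sc (q - inverse q))) (rrm N n sc R k)"
    unfolding tmap_add[OF S] tmap_nr[OF S] tmap_tid[OF S] tm_scm_l rrm_def
    by (simp add: nr_def tmap_def tsmul_def fun_eq_iff sc_mult[OF S] sc_0[OF S])
  finally show ?thesis .
qed

lemma rr_braid: "k+3 \<le> n \<Longrightarrow>
  tm N n (rrm N n sc R k) (tm N n (rrm N n sc R (Suc k)) (rrm N n sc R k)) =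
  tm N n (rrm N n sc R (Suc k)) (tm N n (rrm N n sc R k) (rrm N n sc R (Suc k)))"
  unfolding rrm_def using braidc[OF H] by (simp add: sc_tm')

lemma rr_far: "i+2 \<le> j \<Longrightarrow> j+2 \<le> n \<Longrightarrow>
  tm N n (rrm N n sc R i) (rrm N n sc R j) = tm N n (rrm N n sc R j) (rrm N n sc R i)"
  unfolding rrm_def using farc[of sc, OF sc_0[OF S] sc_central[OF S]] by simp

lemma rr_loc: "1 \<le> j \<Longrightarrow> j+2 \<le> n \<Longrightarrow>
  tm N n (nr N n (op1 A)) (rrm N n sc R j) = tm N n (rrm N n sc R j) (nr N n (op1 A))"
  unfolding rrm_def using loc1c[of sc, OF sc_0[OF S]] sc_central[OF S] by (simp add: sc_central[OF S])

lemma scm_c: "tm N n (scm N n (sc x)) X = tm N n X (scm N n (sc x))"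
  by (simp add: tm_scm_l tm_scm_r sc_central[OF S])

end


lemma weyl_parts:
  assumes "weyl_rel N sc R Ri M D"
  shows "teq N 2 (tmul N 2 (tmap sc (op2 Ri 0)) (tmul N 2 (op1 D) (tmul N 2 (tmap sc (op2 Ri 0)) (op1 D))))
              (tmul N 2 (op1 D) (tmul N 2 (tmap sc (op2 Ri 0)) (tmul N 2 (op1 D) (tmap sc (op2 Ri 0)))))"
    and "teq N 2 (tmul N 2 (op1 D) (tmul N 2 (tmap sc (op2 R 0)) (tmul N 2 (op1 M) (tmap sc (op2 Ri 0)))))
              (tadd (tmap sc (op2 Ri 0)) (tmul N 2 (tmul N 2 (tmap sc (op2 R 0)) (tmul N 2 (op1 M) (tmap sc (op2 Ri 0))))
                  (tmul N 2 (op1 D) (tmul N 2 (tmap sc (op2 Ri 0)) (tmap sc (op2 Ri 0))))))"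
proof -
  have b2: "bar N 2 sc R Ri M 2 = tmul N 2 (tmap sc (op2 R 0)) (tmul N 2 (op1 M) (tmap sc (op2 Ri 0)))"
    by (simp add: numeral_2_eq_2)
  show "teq N 2 (tmul N 2 (tmap sc (op2 Ri 0)) (tmul N 2 (op1 D) (tmul N 2 (tmap sc (op2 Ri 0)) (op1 D))))
              (tmul N 2 (op1 D) (tmul N 2 (tmap sc (op2 Ri 0)) (tmul N 2 (op1 D) (tmap sc (op2 Ri 0)))))"
    using assms unfolding weyl_rel_def Let_def by blast
  show "teq N 2 (tmul N 2 (op1 D) (tmul N 2 (tmap sc (op2 R 0)) (tmul N 2 (op1 M) (tmap sc (op2 Ri 0)))))
              (tadd (tmap sc (op2 Ri 0)) (tmul N 2 (tmul N 2 (tmap sc (op2 R 0)) (tmul N 2 (op1 M) (tmap sc (op2 Ri 0))))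
                  (tmul N 2 (op1 D) (tmul N 2 (tmap sc (op2 Ri 0)) (tmap sc (op2 Ri 0))))))"
    using assms unfolding weyl_rel_def Let_def b2 by blast
qed

context
  fixes N n :: nat and sc :: "complex \<Rightarrow> 'a::ring_1"
  assumes S: "complex_alg sc" and n2: "2 \<le> n"
begin

lemma atomR: "nr N n (lift 0 2 (tmap sc (op2 X 0))) = rrm N n sc X 0"
proof -
  have "nr N n (lift 0 2 (tmap sc (op2 X 0))) = tmap sc (nr N n (lift 0 2 (op2 X 0)))"
    by (simp add: lift_tmap[of sc, OF sc_0[OF S], symmetric] tmap_nr[OF S])
  also have "\<dots> = tmap sc (nr N n (op2 X 0))" using nr_lift_op2_0[of 0 n N X] n2 by simp
  finally show ?thesis unfolding rrm_def by (simp add: tmap_nr[OF S])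
qed

lemma atom1: "nr N n (lift 0 2 (op1 A)) = nr N n (op1 A)"
  using nr_lift_op1[of 2 n N A] n2 by simp

lemma liftW:
  assumes "teq N 2 X Y"
  shows "nr N n (lift 0 2 X) = nr N n (lift 0 2 (Y::'a tmat))"
  using nr_lift_cong[OF assms] n2 by simp

lemma weyl_n:
  assumes W: "weyl_rel N sc R Ri M D"
  shows "tm N n (nr N n (op1 D)) (tm N n (rrm N n sc R 0) (tm N n (nr N n (op1 M)) (rrm N n sc Ri 0))) =
     rrm N n sc Ri 0 + tm N n (tm N n (rrm N n sc R 0) (tm N n (nr N n (op1 M)) (rrm N n sc Ri 0)))
        (tm N n (nr N n (op1 D)) (tm N n (rrm N n sc Ri 0) (rrm N n sc Ri 0)))"
  using liftW[OF weyl_parts(2)[OF W]] n2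
  by (simp only: nr_lift_mul' tadd_plus nr_lift_add atomR atom1)

lemma reD_n:
  assumes W: "weyl_rel N sc R Ri M D"
  shows "tm N n (rrm N n sc Ri 0) (tm N n (nr N n (op1 D)) (tm N n (rrm N n sc Ri 0) (nr N n (op1 D)))) =
     tm N n (nr N n (op1 D)) (tm N n (rrm N n sc Ri 0) (tm N n (nr N n (op1 D)) (rrm N n sc Ri 0)))"
  using liftW[OF weyl_parts(1)[OF W]] n2
  by (simp only: nr_lift_mul' atomR atom1)

end


lemma qw_inst:
  fixes N n :: nat and q :: complex and R Ri :: "nat \<Rightarrow> nat \<Rightarrow> nat \<Rightarrow> nat \<Rightarrow> complex"
    and sc :: "complex \<Rightarrow> 'a::ring_1" and M D :: "nat \<Rightarrow> nat \<Rightarrow> 'a"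
  assumes H: "skew_inv_hecke N q R Ri" and S: "complex_alg sc" and W: "weyl_rel N sc R Ri M D"
    and n1: "1 \<le> n" and q: "q \<noteq> 0" "q \<noteq> 1" "q \<noteq> -1"
  shows "qw (tm N n) (nr N n) (nr N n tid) n (rrm N n sc R) (rrm N n sc Ri)
     (\<lambda>k. nr N n (bar N n sc R Ri M k)) (\<lambda>k. nr N n (bar N n sc R Ri D k))
     (\<lambda>k. nr N n (bar N n sc R Ri (\<lambda>i j. \<Sum>k<N. M i k * D k j) k))
     (\<lambda>k. nr N n (tmap sc (Jinv N n Ri k)))
     (scm N n (sc (q - inverse q))) (scm N n (sc (1 / (q - inverse q))))"
proof unfold_locales
  show "tm N n (tm N n x y) z = tm N n x (tm N n y z)" for x y z :: "'a tmat" by (rule tm_assoc)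
  show "tm N n x (y + z) = tm N n x y + tm N n x z" for x y z :: "'a tmat" by (rule tm_distL)
  show "tm N n (x + y) z = tm N n x z + tm N n y z" for x y z :: "'a tmat" by (rule tm_distR)
  show "nr N n (tm N n x y) = tm N n x y" for x y :: "'a tmat" by simp
  show "tm N n (nr N n x) y = tm N n x y" for x y :: "'a tmat" by simp
  show "tm N n x (nr N n y) = tm N n x y" for x y :: "'a tmat" by simp
  show "tm N n (nr N n tid) x = nr N n x" for x :: "'a tmat" by simp
  show "tm N n x (nr N n tid) = nr N n x" for x :: "'a tmat" by simp
  show "nr N n (x + y) = nr N n x + nr N n y" for x y :: "'a tmat" by (rule nr_add)
  show "nr N n (nr N n tid) = nr N n tid" by simp
  show "nr N n (rrm N n sc R k) = rrm N n sc R k" for k by (simp add: rrm_def)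
  show "nr N n (rrm N n sc Ri k) = rrm N n sc Ri k" for k by (simp add: rrm_def)
  show "nr N n (nr N n (bar N n sc R Ri M k)) = nr N n (bar N n sc R Ri M k)" for k by simp
  show "nr N n (nr N n (bar N n sc R Ri D k)) = nr N n (bar N n sc R Ri D k)" for k by simp
  show "nr N n (nr N n (bar N n sc R Ri (\<lambda>i j. \<Sum>k<N. M i k * D k j) k)) = nr N n (bar N n sc R Ri (\<lambda>i j. \<Sum>k<N. M i k * D k j) k)" for k by simp
  show "nr N n (nr N n (tmap sc (Jinv N n Ri k))) = nr N n (tmap sc (Jinv N n Ri k))" for k by simp
  show "nr N n (scm N n (sc (q - inverse q))) = scm N n (sc (q - inverse q))" by (simp add: scm_def)
  show "nr N n (scm N n (sc (1 / (q - inverse q)))) = scm N n (sc (1 / (q - inverse q)))" by (simp add: scm_def)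
  show "tm N n (scm N n (sc (q - inverse q))) x = tm N n x (scm N n (sc (q - inverse q)))" for x :: "'a tmat"
    by (rule scm_c[OF H S])
  show "tm N n (scm N n (sc (1 / (q - inverse q)))) x = tm N n x (scm N n (sc (1 / (q - inverse q))))" for x :: "'a tmat"
    by (rule scm_c[OF H S])
  show "tm N n (scm N n (sc (1 / (q - inverse q)))) (scm N n (sc (q - inverse q))) = nr N n tid"
  proof -
    have l: "q - inverse q \<noteq> 0"
    proof
      assume "q - inverse q = 0"
      then have "q * q = 1" using q(1) by (simp add: field_simps)
      then have "(q - 1) * (q + 1) = 0" by (simp add: algebra_simps)
      then show False using q by (simp add: eq_neg_iff_add_eq_0)
    qed
    have sl: "sc (1 / (q - inverse q)) * sc (q - inverse q) = 1"
      using l by (simp add: sc_mult[OF S, symmetric] sc_1[OF S])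
    have "tm N n (scm N n (sc (1 / (q - inverse q)))) (scm N n (sc (q - inverse q))) =
      nr N n (\<lambda>I K. sc (1 / (q - inverse q)) * scm N n (sc (q - inverse q)) I K)" by (rule tm_scm_l)
    also have "\<dots> = nr N n tid" using sl
      by (intro nr_cong) (simp add: scm_def nr_def mult.assoc[symmetric])
    finally show ?thesis .
  qed
  show "k+2 \<le> n \<Longrightarrow> tm N n (rrm N n sc R k) (rrm N n sc Ri k) = nr N n tid" for k
    by (rule rr_inv1[OF H S])
  show "k+2 \<le> n \<Longrightarrow> tm N n (rrm N n sc Ri k) (rrm N n sc R k) = nr N n tid" for k
    by (rule rr_inv2[OF H S])
  show "k+2 \<le> n \<Longrightarrow> tm N n (rrm N n sc R k) (rrm N n sc R k) =
     nr N n tid + tm N n (scm N n (sc (q - inverse q))) (rrm N n sc R k)" for k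
    by (rule rr_hecke[OF H S])
  show "k+3 \<le> n \<Longrightarrow> tm N n (rrm N n sc R k) (tm N n (rrm N n sc R (Suc k)) (rrm N n sc R k)) =
     tm N n (rrm N n sc R (Suc k)) (tm N n (rrm N n sc R k) (rrm N n sc R (Suc k)))" for k
    using rr_braid[OF H S] by (simp add: tm_assoc)
  show "i+2 \<le> j \<Longrightarrow> j+2 \<le> n \<Longrightarrow> tm N n (rrm N n sc R i) (rrm N n sc R j) = tm N n (rrm N n sc R j) (rrm N n sc R i)" for i j
    by (rule rr_far[OF H S])
  show "1 \<le> j \<Longrightarrow> j+2 \<le> n \<Longrightarrow> tm N n (nr N n (bar N n sc R Ri M 1)) (rrm N n sc R j) = tm N n (rrm N n sc R j) (nr N n (bar N n sc R Ri M 1))" for j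
    using rr_loc[OF H S] by simp
  show "1 \<le> j \<Longrightarrow> j+2 \<le> n \<Longrightarrow> tm N n (nr N n (bar N n sc R Ri D 1)) (rrm N n sc R j) = tm N n (rrm N n sc R j) (nr N n (bar N n sc R Ri D 1))" for j
    using rr_loc[OF H S] by simp
  show "nr N n (bar N n sc R Ri M (Suc (Suc k))) = tm N n (rrm N n sc R k) (tm N n (nr N n (bar N n sc R Ri M (Suc k))) (rrm N n sc Ri k))" for k
    by (simp add: nr_tmul rrm_def tm_assoc)
  show "nr N n (bar N n sc R Ri D (Suc (Suc k))) = tm N n (rrm N n sc R k) (tm N n (nr N n (bar N n sc R Ri D (Suc k))) (rrm N n sc Ri k))" for k
    by (simp add: nr_tmul rrm_def tm_assoc)
  show "nr N n (bar N n sc R Ri (\<lambda>i j. \<Sum>k<N. M i k * D k j) (Suc (Suc k))) = tm N n (rrm N n sc R k) (tm N n (nr N n (bar N n sc R Ri (\<lambda>i j. \<Sum>k<N. M i k * D k j) (Suc k))) (rrm N n sc Ri k))" for k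
    by (simp add: nr_tmul rrm_def tm_assoc)
  show "nr N n (bar N n sc R Ri (\<lambda>i j. \<Sum>k<N. M i k * D k j) 1) = tm N n (nr N n (bar N n sc R Ri M 1)) (nr N n (bar N n sc R Ri D 1))"
    using op1_mul[OF n1, of N M D] by simp
  show "nr N n (tmap sc (Jinv N n Ri 1)) = nr N n tid" by (simp add: tmap_tid[OF S])
  show "nr N n (tmap sc (Jinv N n Ri (Suc (Suc k)))) = tm N n (rrm N n sc Ri k) (tm N n (nr N n (tmap sc (Jinv N n Ri (Suc k)))) (rrm N n sc Ri k))" for k
    by (simp add: nr_tmul rrm_def tm_assoc tmap_tmul[OF S])
  show "2 \<le> n \<Longrightarrow> tm N n (rrm N n sc Ri 0) (tm N n (nr N n (bar N n sc R Ri D 1)) (tm N n (rrm N n sc Ri 0) (nr N n (bar N n sc R Ri D 1)))) =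
     tm N n (nr N n (bar N n sc R Ri D 1)) (tm N n (rrm N n sc Ri 0) (tm N n (nr N n (bar N n sc R Ri D 1)) (rrm N n sc Ri 0)))"
    using reD_n[OF S _ W] by (simp add: tm_assoc)
  show "2 \<le> n \<Longrightarrow> tm N n (nr N n (bar N n sc R Ri D 1)) (nr N n (bar N n sc R Ri M 2)) =
     rrm N n sc Ri 0 + tm N n (nr N n (bar N n sc R Ri M 2)) (tm N n (nr N n (bar N n sc R Ri D 1)) (tm N n (rrm N n sc Ri 0) (rrm N n sc Ri 0)))"
    using weyl_n[OF S _ W] by (simp add: tm_assoc numeral_2_eq_2 nr_tmul rrm_def)
qed


lemma nr_tprod: "nr N n (tprod N n xs) = foldr (tm N n) (map (nr N n) xs) (nr N n (tid::'a::semiring_1 tmat))"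
  unfolding tprod_def by (induction xs) (simp_all add: nr_tmul)

theorem theorem1:
  fixes N n :: nat and q :: complex
    and R Ri :: "nat \<Rightarrow> nat \<Rightarrow> nat \<Rightarrow> nat \<Rightarrow> complex"
    and sc :: "complex \<Rightarrow> 'a::ring_1"
    and M D :: "nat \<Rightarrow> nat \<Rightarrow> 'a"
  assumes "N \<ge> 1"
    and "q \<noteq> 0" and "q \<noteq> 1" and "q \<noteq> -1" and "\<forall>k::nat. k > 0 \<longrightarrow> q ^ k \<noteq> 1"
    and "skew_inv_hecke N q R Ri"
    and "complex_alg sc"
    and "weyl_rel N sc R Ri M D"
    and "n \<ge> 1"
  shows "(let L = (\<lambda>i j. \<Sum>k<N. M i k * D k j) in
          teq N n
            (tmul N n (bar N n sc R Ri L 1)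
               (tprod N n (map (\<lambda>k. tadd (bar N n sc R Ri L k)
                   (tmap sc (tsmul (1 / (q - inverse q)) (tminus (Jinv N n Ri k) tid))))
                 [2..<n+1])))
            (tmul N n (tprod N n (map (\<lambda>k. bar N n sc R Ri M k) [1..<n+1]))
               (tmul N n (tprod N n (map (\<lambda>k. bar N n sc R Ri D k) (rev [1..<n+1])))
                  (tprod N n (map (\<lambda>k. tmap sc (Jinv N n Ri k)) [1..<n+1])))))"
proof -
  note H = assms(6) and S = assms(7) and W = assms(8) and n1 = assms(9)
  define Lm where "Lm = (\<lambda>i j. \<Sum>k<N. M i k * D k j)"
  interpret Q: qw "tm N n" "nr N n" "nr N n tid" n "rrm N n sc R" "rrm N n sc Ri"
     "\<lambda>k. nr N n (bar N n sc R Ri M k)" "\<lambda>k. nr N n (bar N n sc R Ri D k)"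
     "\<lambda>k. nr N n (bar N n sc R Ri Lm k)"
     "\<lambda>k. nr N n (tmap sc (Jinv N n Ri k))"
     "scm N n (sc (q - inverse q))" "scm N n (sc (1 / (q - inverse q)))"
    unfolding Lm_def by (rule qw_inst[OF H S W n1 assms(2-4)])
  have pr: "nr N n (tprod N n xs) = Q.prodl (map (nr N n) xs)" for xs :: "'a tmat list"
    unfolding Q.prodl_def nr_tprod ..
  have Fk: "nr N n (tadd (bar N n sc R Ri Lm k) (tmap sc (tsmul (1 / (q - inverse q)) (tminus (Jinv N n Ri k) tid))))
      = Q.F k" for k
  proof -
    have g: "nr N n (tmap sc (tsmul c (tminus (Jinv N n Ri k) tid))) =
      tm N n (scm N n (sc c)) (nr N n (tmap sc (Jinv N n Ri k)) - nr N n tid)" for c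
      unfolding tm_scm_l
      by (intro nr_cong) (simp add: nr_def tmap_def tsmul_def tminus_def tid_def sc_mult[OF S] sc_minus[OF S] sc_1[OF S] sc_0[OF S])
    show ?thesis unfolding Q.F_def tadd_plus nr_add g by simp
  qed
  have "tm N n (nr N n (bar N n sc R Ri Lm 1)) (Q.prodl (map Q.F [2..<n+1])) =
      tm N n (Q.prodl (map (\<lambda>k. nr N n (bar N n sc R Ri M k)) [1..<n+1]))
        (tm N n (Q.Zp n) (Q.prodl (map (\<lambda>k. nr N n (tmap sc (Jinv N n Ri k))) [1..<n+1])))"
    using Q.main_alg[OF n1 order_refl] by simp
  then show ?thesis
    unfolding Let_def Lm_def[symmetric] teq_nr nr_tmul pr Q.Zp_prodl
    by (simp add: Fk comp_def)
qed


end
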